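(* Let $\alpha\in(0,1)$ and let $A,B$ be finite-dimensional quantum systems. For a quantum channel $\Phi(\rho)=\sum_iK_i\rho K_i^\dagger$ ($\sum_iK_i^\dagger K_i=\mathrm{I}$) and a state $\rho$ set $T_\alpha(\rho,\Phi)=1-\mathrm{tr}\,\rho^\alpha\Phi(\rho^{1-\alpha})$, and for a bipartite state $\rho_{AB}$ with $\rho_A=\mathrm{tr}_B\rho_{AB}$ and a channel $\Phi_A$ on $A$ define $$D^T_\alpha(\rho_{AB}|\Phi_A)=T_\alpha(\rho_{AB},\Phi_A\otimes\mathcal{I}_B)-T_\alpha(\rho_A,\Phi_A),$$ where $\mathcal{I}_B$ is the identity channel on $B$. Then: (i) $D^T_\alpha(\rho_{AB}|\Phi_A)\ge0$, with equality when $\rho_{AB}=\rho_A\otimes\rho_B$ is a product state. (ii) For any unitaries $U_A$ on $A$ and $U_B$ on $B$, $D^T_\alpha\big((U_A\otimes U_B)\rho_{AB}(U_A\otimes U_B)^\dagger\,\big|\,\Phi_A\big)=D^T_\alpha(\rho_{AB}|\mathcal{U}_A^\dagger\Phi_A\mathcal{U}_A)$, where $\mathcal{U}_A^\dagger\Phi_A\mathcal{U}_A(\rho_A)=\sum_i(U_A^\dagger K_iU_A)\rho_A(U_A^\dagger K_iU_A)^\dagger$ for $\Phi_A(\rho)=\sum_iK_i\rho K_i^\dagger$. (iii) For any channel $\Phi_B$ on $B$, $D^T_\alpha\big((\mathcal{I}_A\otimes\Phi_B)(\rho_{AB})\,\big|\,\Phi_A\big)\le D^T_\alpha(\rho_{AB}|\Phi_A)$,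 where $\mathcal{I}_A$ is the identity channel on $A$.
   Context: $\rho^\alpha$ denotes the functional-calculus power of the positive operator $\rho$. The channel $\Phi_A\otimes\mathcal{I}_B$ has Kraus operators $K_i\otimes\mathrm{I}_B$. *)

theory Defs
  imports "HOL-Analysis.Analysis" "HOL-Library.Complex_Order"
begin

text \<open>Finite-dimensional quantum systems: operators on the system with (finite) basis index
  type 'n are complex matrices of type complex^'n^'n.  The composite system AB is indexed by
  'a \<times> 'b.\<close>

type_synonym 'n cmat = "complex^'n^'n"

definition adj :: "'n::finite cmat \<Rightarrow> 'n cmat" where
  "adj M = (\<chi> i j. cnj (M $ j $ i))"

definition hermitian :: "'n::finite cmat \<Rightarrow> bool" where
  "hermitian M \<longleftrightarrow> adj M = M"

definition psd :: "'n::finite cmat \<Rightarrow> bool" where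
  "psd M \<longleftrightarrow> hermitian M \<and> (\<forall>x::complex^'n. 0 \<le> (\<Sum>i\<in>UNIV. cnj (x $ i) * (M *v x) $ i))"

definition density :: "'n::finite cmat \<Rightarrow> bool" where
  "density \<rho> \<longleftrightarrow> psd \<rho> \<and> trace \<rho> = 1"

definition unitary :: "'n::finite cmat \<Rightarrow> bool" where
  "unitary U \<longleftrightarrow> adj U ** U = mat 1 \<and> U ** adj U = mat 1"

definition diag_mat :: "('n::finite \<Rightarrow> complex) \<Rightarrow> 'n cmat" where
  "diag_mat d = (\<chi> i j. if i = j then d i else 0)"

text \<open>Functional-calculus power of a positive operator, via its spectral decomposition
  (independent of the chosen decomposition).\<close>
definition mpow :: "'n::finite cmat \<Rightarrow> real \<Rightarrow> 'n cmat" where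
  "mpow \<rho> a = (SOME X. \<exists>U d. unitary U \<and> (\<forall>i. 0 \<le> d i) \<and>
       \<rho> = U ** diag_mat (\<lambda>i. complex_of_real (d i)) ** adj U \<and>
       X = U ** diag_mat (\<lambda>i. complex_of_real (d i powr a)) ** adj U)"

definition is_channel :: "'n::finite cmat list \<Rightarrow> bool" where
  "is_channel Ks \<longleftrightarrow> (\<Sum>K\<leftarrow>Ks. adj K ** K) = mat 1"

definition apply_ch :: "'n::finite cmat list \<Rightarrow> 'n cmat \<Rightarrow> 'n cmat" where
  "apply_ch Ks \<rho> = (\<Sum>K\<leftarrow>Ks. K ** \<rho> ** adj K)"

definition kron :: "'a::finite cmat \<Rightarrow> 'b::finite cmat \<Rightarrow> ('a \<times> 'b) cmat" where
  "kron A B = (\<chi> p q. A $ fst p $ fst q * B $ snd p $ snd q)"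

definition ptrace_B :: "('a::finite \<times> 'b::finite) cmat \<Rightarrow> 'a cmat" where
  "ptrace_B \<rho> = (\<chi> i k. \<Sum>j\<in>UNIV. \<rho> $ (i, j) $ (k, j))"

definition T_alpha :: "real \<Rightarrow> 'n::finite cmat \<Rightarrow> 'n cmat list \<Rightarrow> complex" where
  "T_alpha a \<rho> Ks = 1 - trace (mpow \<rho> a ** apply_ch Ks (mpow \<rho> (1 - a)))"

definition ext_A :: "'a::finite cmat list \<Rightarrow> ('a \<times> 'b::finite) cmat list" where
  "ext_A Ks = map (\<lambda>K. kron K (mat 1)) Ks"

definition ext_B :: "'b::finite cmat list \<Rightarrow> ('a::finite \<times> 'b) cmat list" where
  "ext_B Ls = map (\<lambda>L. kron (mat 1) L) Ls"

definition DT :: "real \<Rightarrow> ('a::finite \<times> 'b::finite) cmat \<Rightarrow> 'a cmat list \<Rightarrow> complex" where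
  "DT a \<rho> Ks = T_alpha a \<rho> (ext_A Ks) - T_alpha a (ptrace_B \<rho>) Ks"

end

theory Submission
  imports Defs
begin

definition phi :: "real \<Rightarrow> real \<Rightarrow> real \<Rightarrow> real" where
  "phi s p q = p * q / (s * q + p)"

definition Cint :: "real \<Rightarrow> ennreal" where
  "Cint a = (\<integral>\<^sup>+u. ennreal (indicator {0<..} u * (u powr (a-1) / (1+u))) \<partial>lborel)"

lemma meas1[measurable]: "(\<lambda>s::real. ennreal (indicator {0<..} s * (s powr (a-1) * phi s p q))) \<in> borel_measurable borel"
  unfolding phi_def by measurable

lemma meas2[measurable]: "(\<lambda>u::real. ennreal (indicator {0<..} u * (u powr (a-1) / (1+u)))) \<in> borel_measurable borel"
  by measurable

lemma pointwise:
  assumes p: "p > 0" and q: "q > 0" and x: "x > 0"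
  shows "(p/q) * (((p/q)*x) powr (a-1) * phi ((p/q)*x) p q) = p powr a * q powr (1-a) * (x powr (a-1) / (1+x))"
proof -
  have c: "p/q > 0" using p q by simp
  have "phi ((p/q)*x) p q = q / (1+x)"
  proof -
    have "(p/q*x)*q + p = p*(1+x)" using q by (simp add: field_simps)
    then have "phi ((p/q)*x) p q = p*q / (p*(1+x))" unfolding phi_def by simp
    also have "\<dots> = q/(1+x)" using p by simp
    finally show ?thesis .
  qed
  moreover have "((p/q)*x) powr (a-1) = (p/q) powr (a-1) * x powr (a-1)"
    using c x powr_mult[of "p/q" x "a-1"] by simp
  moreover have "(p/q) * (p/q) powr (a-1) = (p/q) powr a"
  proof -
    have "(p/q) powr a = (p/q) powr ((a-1) + 1)" by simp
    also have "\<dots> = (p/q) powr (a-1) * (p/q) powr 1" by (rule powr_add)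
    then show ?thesis using c p q by (simp add: abs_of_pos)
  qed
  moreover have "(p/q) powr a * q = p powr a * q powr (1-a)"
    using p q by (simp add: powr_divide powr_diff field_simps)
  ultimately show ?thesis
    by (smt (verit, ccfv_threshold) mult.assoc mult.commute times_divide_eq_right)
qed

lemma int_phi:
  assumes p: "p \<ge> 0" and q: "q \<ge> 0" and a: "0 < a" "a < 1"
  shows "(\<integral>\<^sup>+s. ennreal (indicator {0<..} s * (s powr (a-1) * phi s p q)) \<partial>lborel)
       = ennreal (p powr a * q powr (1-a)) * Cint a"
proof (cases "p = 0 \<or> q = 0")
  case True
  then have "phi s p q = 0" for s unfolding phi_def by auto
  moreover have "p powr a * q powr (1-a) = 0" using True a by auto
  ultimately show ?thesis by simp
next
  case False
  then have p': "p > 0" and q': "q > 0" using p q by auto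
  define c where "c = p/q"
  have c: "c > 0" "c \<noteq> 0" using p' q' unfolding c_def by auto
  have "(\<integral>\<^sup>+s. ennreal (indicator {0<..} s * (s powr (a-1) * phi s p q)) \<partial>lborel)
     = ennreal \<bar>c\<bar> * (\<integral>\<^sup>+x. ennreal (indicator {0<..} (0 + c*x) * ((0 + c*x) powr (a-1) * phi (0 + c*x) p q)) \<partial>lborel)"
    by (rule nn_integral_real_affine[OF meas1 c(2)])
  also have "\<dots> = (\<integral>\<^sup>+x. ennreal \<bar>c\<bar> * ennreal (indicator {0<..} (c*x) * ((c*x) powr (a-1) * phi (c*x) p q)) \<partial>lborel)"
    by (subst nn_integral_cmult) (auto simp: phi_def)
  also have "\<dots> = (\<integral>\<^sup>+x. ennreal (p powr a * q powr (1-a)) * ennreal (indicator {0<..} x * (x powr (a-1) / (1+x))) \<partial>lborel)"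
  proof (rule nn_integral_cong)
    fix x :: real
    show "ennreal \<bar>c\<bar> * ennreal (indicator {0<..} (c*x) * ((c*x) powr (a-1) * phi (c*x) p q))
        = ennreal (p powr a * q powr (1-a)) * ennreal (indicator {0<..} x * (x powr (a-1) / (1+x)))"
    proof (cases "x > 0")
      case True
      then have "c*x > 0" using c by simp
      have R: "\<bar>c\<bar> * (indicator {0<..} (c*x) * ((c*x) powr (a-1) * phi (c*x) p q))
           = p powr a * q powr (1-a) * (indicator {0<..} x * (x powr (a-1) / (1+x)))"
        using pointwise[OF p' q' True, of a] True \<open>c*x > 0\<close> c p' q' by (simp add: c_def abs_of_pos)
      have "ennreal \<bar>c\<bar> * ennreal (indicator {0<..} (c*x) * ((c*x) powr (a-1) * phi (c*x) p q))
          = ennreal (\<bar>c\<bar> * (indicator {0<..} (c*x) * ((c*x) powr (a-1) * phi (c*x) p q)))"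
        by (rule ennreal_mult'[symmetric]) simp
      also have "\<dots> = ennreal (p powr a * q powr (1-a) * (indicator {0<..} x * (x powr (a-1) / (1+x))))"
        using R by simp
      also have "\<dots> = ennreal (p powr a * q powr (1-a)) * ennreal (indicator {0<..} x * (x powr (a-1) / (1+x)))"
        by (rule ennreal_mult') simp
      finally show ?thesis .
    next
      case False
      then have "\<not> c*x > 0" using c by (simp add: zero_less_mult_iff)
      then show ?thesis using False by simp
    qed
  qed
  also have "\<dots> = ennreal (p powr a * q powr (1-a)) * Cint a"
    unfolding Cint_def by (rule nn_integral_cmult) measurable
  finally show ?thesis .
qed

lemma Cint_finite:
  assumes a: "0 < a" "a < 1"
  shows "Cint a < \<infinity>"
proof -
  have h1: "((\<lambda>x. x powr (a-1)) has_integral (1 powr (a-1+1) / (a-1+1))) {0..1::real}"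
    by (rule has_integral_powr_from_0) (use a in auto)
  have h2: "((\<lambda>x. x powr (a-2)) has_integral (-(1 powr (a-2+1)) / (a-2+1))) {1::real..}"
    by (rule has_integral_powr_to_inf) (use a in auto)
  have e1: "(\<integral>\<^sup>+x. ennreal (x powr (a-1)) * indicator {0..1::real} x \<partial>lborel) = ennreal (1 powr (a-1+1) / (a-1+1))"
    by (rule nn_integral_has_integral_lebesgue'[OF _ h1]) simp
  have e2: "(\<integral>\<^sup>+x. ennreal (x powr (a-2)) * indicator {1::real..} x \<partial>lborel) = ennreal (-(1 powr (a-2+1)) / (a-2+1))"
    by (rule nn_integral_has_integral_lebesgue'[OF _ h2]) simp
  have "Cint a \<le> (\<integral>\<^sup>+x. ennreal (x powr (a-1)) * indicator {0..1::real} x + ennreal (x powr (a-2)) * indicator {1::real..} x \<partial>lborel)"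
    unfolding Cint_def
  proof (rule nn_integral_mono)
    fix x :: real
    show "ennreal (indicator {0<..} x * (x powr (a-1) / (1+x)))
       \<le> ennreal (x powr (a-1)) * indicator {0..1} x + ennreal (x powr (a-2)) * indicator {1..} x"
    proof (cases "x > 0")
      case False then show ?thesis by simp
    next
      case True
      show ?thesis
      proof (cases "x \<le> 1")
        case True
        have "x powr (a-1) / (1+x) \<le> x powr (a-1)" using \<open>x>0\<close>
          by (simp add: divide_le_eq)
        then have "ennreal (indicator {0<..} x * (x powr (a-1) / (1+x))) \<le> ennreal (x powr (a-1)) * indicator {0..1} x"
          using True \<open>x>0\<close> by (simp add: indicator_def)
        then show ?thesis by (rule add_increasing2[rotated]) simp
      next
        case False
        have "x powr (a-2) = x powr ((a-1) - 1)" by simp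
        also have "\<dots> = x powr (a-1) / x powr 1" by (rule powr_diff)
        also have "\<dots> = x powr (a-1) / x" using \<open>x>0\<close> by simp
        finally have "x powr (a-2) = x powr (a-1) / x" .
        moreover have "x powr (a-1) / (1+x) \<le> x powr (a-1) / x" using \<open>x>0\<close>
          by (intro divide_left_mono) auto
        ultimately show ?thesis using False \<open>x>0\<close> by (simp add: indicator_def)
      qed
    qed
  qed
  also have "\<dots> = (\<integral>\<^sup>+x. ennreal (x powr (a-1)) * indicator {0..1::real} x \<partial>lborel) + (\<integral>\<^sup>+x. ennreal (x powr (a-2)) * indicator {1::real..} x \<partial>lborel)"
    by (rule nn_integral_add) auto
  also have "\<dots> < \<infinity>" unfolding e1 e2 by simp
  finally show ?thesis .
qed

lemma Cint_pos:
  assumes a: "0 < a" "a < 1"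
  shows "Cint a > 0"
proof -
  have "(\<integral>\<^sup>+x. ennreal (1/6) * indicator {1..2::real} x \<partial>lborel) \<le> Cint a"
    unfolding Cint_def
  proof (rule nn_integral_mono)
    fix x :: real
    show "ennreal (1/6) * indicator {1..2} x \<le> ennreal (indicator {0<..} x * (x powr (a-1) / (1+x)))"
    proof (cases "x \<in> {1..2}")
      case False then show ?thesis by simp
    next
      case True
      then have x: "1 \<le> x" "x \<le> 2" by auto
      have "x powr (-1) \<le> x powr (a-1)" using x a by (intro powr_mono) auto
      moreover have "x powr (-1) = 1/x" using x by (simp add: powr_minus divide_inverse)
      moreover have "1/x \<ge> 1/2" using x by (simp add: field_simps)
      ultimately have "x powr (a-1) \<ge> 1/2" by linarith
      moreover have "1 + x \<le> 3" using x by simp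
      ultimately have "x powr (a-1) / (1+x) \<ge> (1/2)/3"
        using x by (intro frac_le) auto
      then show ?thesis using x by (simp add: indicator_def)
    qed
  qed
  moreover have "(\<integral>\<^sup>+x. ennreal (1/6) * indicator {1..2::real} x \<partial>lborel) = ennreal (1/6)"
    by (subst nn_integral_cmult_indicator) auto
  ultimately show ?thesis by (metis ennreal_eq_0_iff not_gr_zero order_le_less_trans not_le le_zero_eq
       divide_pos_pos zero_less_numeral zero_less_one less_le)
qed

lemma phi_nonneg: "s > 0 \<Longrightarrow> p \<ge> 0 \<Longrightarrow> q \<ge> 0 \<Longrightarrow> phi s p q \<ge> 0"
  unfolding phi_def by simp

lemma sumint:
  assumes fin: "finite I" and a: "0 < a" "a < 1"
    and nn: "\<And>i. i \<in> I \<Longrightarrow> w i \<ge> 0 \<and> p i \<ge> 0 \<and> q i \<ge> 0"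
  shows "(\<integral>\<^sup>+s. ennreal (indicator {0<..} s * (s powr (a-1) * (\<Sum>i\<in>I. w i * phi s (p i) (q i)))) \<partial>lborel)
       = ennreal (\<Sum>i\<in>I. w i * (p i powr a * q i powr (1-a))) * Cint a"
proof -
  have "(\<integral>\<^sup>+s. ennreal (indicator {0<..} s * (s powr (a-1) * (\<Sum>i\<in>I. w i * phi s (p i) (q i)))) \<partial>lborel)
      = (\<integral>\<^sup>+s. (\<Sum>i\<in>I. ennreal (w i) * ennreal (indicator {0<..} s * (s powr (a-1) * phi s (p i) (q i)))) \<partial>lborel)"
  proof (rule nn_integral_cong)
    fix s :: real
    show "ennreal (indicator {0<..} s * (s powr (a-1) * (\<Sum>i\<in>I. w i * phi s (p i) (q i))))
        = (\<Sum>i\<in>I. ennreal (w i) * ennreal (indicator {0<..} s * (s powr (a-1) * phi s (p i) (q i))))"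
    proof (cases "s > 0")
      case False then show ?thesis by simp
    next
      case True
      have "(\<Sum>i\<in>I. ennreal (w i) * ennreal (indicator {0<..} s * (s powr (a-1) * phi s (p i) (q i))))
          = (\<Sum>i\<in>I. ennreal (w i * (indicator {0<..} s * (s powr (a-1) * phi s (p i) (q i)))))"
        by (rule sum.cong[OF refl], rule ennreal_mult'[symmetric]) (use nn in auto)
      also have "\<dots> = ennreal (\<Sum>i\<in>I. w i * (indicator {0<..} s * (s powr (a-1) * phi s (p i) (q i))))"
        by (rule sum_ennreal) (use nn True phi_nonneg in auto)
      also have "(\<Sum>i\<in>I. w i * (indicator {0<..} s * (s powr (a-1) * phi s (p i) (q i))))
          = indicator {0<..} s * (s powr (a-1) * (\<Sum>i\<in>I. w i * phi s (p i) (q i)))"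
        by (simp add: sum_distrib_left sum_distrib_right algebra_simps)
      finally show ?thesis by simp
    qed
  qed
  also have "\<dots> = (\<Sum>i\<in>I. (\<integral>\<^sup>+s. ennreal (w i) * ennreal (indicator {0<..} s * (s powr (a-1) * phi s (p i) (q i))) \<partial>lborel))"
    by (rule nn_integral_sum) measurable
  also have "\<dots> = (\<Sum>i\<in>I. ennreal (w i) * (ennreal (p i powr a * q i powr (1-a)) * Cint a))"
    by (rule sum.cong[OF refl], subst nn_integral_cmult) (use nn int_phi a in auto)
  also have "\<dots> = (\<Sum>i\<in>I. ennreal (w i * (p i powr a * q i powr (1-a)))) * Cint a"
    by (subst sum_distrib_right, rule sum.cong[OF refl]) (use nn in \<open>auto simp: ennreal_mult' mult.assoc\<close>)
  also have "\<dots> = ennreal (\<Sum>i\<in>I. w i * (p i powr a * q i powr (1-a))) * Cint a"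
    by (subst sum_ennreal) (use nn in auto)
  finally show ?thesis .
qed

lemma compare_int:
  fixes I :: "'i set" and J :: "'j set"
  assumes fI: "finite I" and fJ: "finite J" and a: "0 < a" "a < 1"
    and nn1: "\<And>i. i \<in> I \<Longrightarrow> w1 i \<ge> 0 \<and> p1 i \<ge> 0 \<and> q1 i \<ge> 0"
    and nn2: "\<And>j. j \<in> J \<Longrightarrow> w2 j \<ge> 0 \<and> p2 j \<ge> 0 \<and> q2 j \<ge> 0"
    and H: "\<And>s. s > 0 \<Longrightarrow> (\<Sum>i\<in>I. w1 i * phi s (p1 i) (q1 i)) \<le> (\<Sum>j\<in>J. w2 j * phi s (p2 j) (q2 j))"
  shows "(\<Sum>i\<in>I. w1 i * (p1 i powr a * q1 i powr (1-a))) \<le> (\<Sum>j\<in>J. w2 j * (p2 j powr a * q2 j powr (1-a)))"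
proof -
  have "(\<integral>\<^sup>+s. ennreal (indicator {0<..} s * (s powr (a-1) * (\<Sum>i\<in>I. w1 i * phi s (p1 i) (q1 i)))) \<partial>lborel)
     \<le> (\<integral>\<^sup>+s. ennreal (indicator {0<..} s * (s powr (a-1) * (\<Sum>j\<in>J. w2 j * phi s (p2 j) (q2 j)))) \<partial>lborel)"
  proof (rule nn_integral_mono)
    fix s :: real
    show "ennreal (indicator {0<..} s * (s powr (a-1) * (\<Sum>i\<in>I. w1 i * phi s (p1 i) (q1 i))))
       \<le> ennreal (indicator {0<..} s * (s powr (a-1) * (\<Sum>j\<in>J. w2 j * phi s (p2 j) (q2 j))))"
      using H[of s] by (cases "s > 0") (auto intro!: ennreal_leI mult_left_mono)
  qed
  then have le: "ennreal (\<Sum>i\<in>I. w1 i * (p1 i powr a * q1 i powr (1-a))) * Cint a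
      \<le> ennreal (\<Sum>j\<in>J. w2 j * (p2 j powr a * q2 j powr (1-a))) * Cint a"
    using sumint[OF fI a, of w1 p1 q1] sumint[OF fJ a, of w2 p2 q2] nn1 nn2 by simp
  have c0: "Cint a \<noteq> 0" using Cint_pos[OF a] by simp
  have ct: "Cint a \<noteq> top" using Cint_finite[OF a] by simp
  from le have "ennreal (\<Sum>i\<in>I. w1 i * (p1 i powr a * q1 i powr (1-a)))
      \<le> ennreal (\<Sum>j\<in>J. w2 j * (p2 j powr a * q2 j powr (1-a)))"
    using ennreal_mult_le_mult_iff[OF c0 ct] by (simp add: mult.commute)
  moreover have "(\<Sum>j\<in>J. w2 j * (p2 j powr a * q2 j powr (1-a))) \<ge> 0"
    using nn2 by (intro sum_nonneg) auto
  ultimately show ?thesis by simp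
qed

lemma matrix_add_rdistrib: "((B + C) ** A) = (B ** A) + (C ** (A::'a::semiring_1^'n^'m))"
  by (vector matrix_matrix_mult_def sum.distrib[symmetric] field_simps)

lemma matrix_diff_ldistrib: "(A ** (B - C)) = (A ** B) - (A ** (C::'a::ring_1^'n^'m))"
  by (vector matrix_matrix_mult_def sum_subtractf[symmetric] field_simps)

lemma matrix_diff_rdistrib: "((B - C) ** A) = (B ** A) - (C ** (A::'a::ring_1^'n^'m))"
  by (vector matrix_matrix_mult_def sum_subtractf[symmetric] field_simps)

lemma adj_nth[simp]: "adj M $ i $ j = cnj (M $ j $ i)"
  by (simp add: adj_def)

lemma adj_adj[simp]: "adj (adj M) = M"
  by (simp add: vec_eq_iff)

lemma adj_mult: "adj (A ** B) = adj B ** adj (A :: 'n::finite cmat)"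
  by (simp add: vec_eq_iff matrix_matrix_mult_def mult.commute)

lemma adj_add: "adj (A + B) = adj A + adj (B :: 'n::finite cmat)"
  by (simp add: vec_eq_iff)

lemma adj_diff: "adj (A - B) = adj A - adj (B :: 'n::finite cmat)"
  by (simp add: vec_eq_iff)

lemma adj_zero[simp]: "adj (0 :: 'n::finite cmat) = 0"
  by (simp add: vec_eq_iff)

lemma adj_mat[simp]: "adj (mat c :: 'n::finite cmat) = mat (cnj c)"
  by (simp add: vec_eq_iff mat_def)

lemma adj_sum_list: "adj (sum_list (map f xs)) = sum_list (map (\<lambda>x. adj (f x :: 'n::finite cmat)) xs)"
  by (induction xs) (auto simp: adj_add)

lemma adj_sum: "adj (\<Sum>i\<in>A. f i) = (\<Sum>i\<in>A. adj (f i :: 'n::finite cmat))"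
  by (induction A rule: infinite_finite_induct) (auto simp: adj_add)

lemma diag_mat_nth[simp]: "diag_mat d $ i $ j = (if i = j then d i else 0)"
  by (simp add: diag_mat_def)

lemma adj_diag_real[simp]: "adj (diag_mat (\<lambda>i. complex_of_real (d i))) = diag_mat (\<lambda>i. complex_of_real (d i))"
  by (simp add: vec_eq_iff)

lemma matrix_mult_sum_list_right: "A ** sum_list (map f xs) = sum_list (map (\<lambda>x. A ** (f x :: 'n::finite cmat)) xs)"
  by (induction xs) (auto simp: matrix_add_ldistrib)

lemma matrix_mult_sum_list_left: "sum_list (map f xs) ** A = sum_list (map (\<lambda>x. (f x :: 'n::finite cmat) ** A) xs)"
  by (induction xs) (auto simp: matrix_add_rdistrib)

lemma trace_sum_list: "trace (sum_list (map f xs)) = sum_list (map (\<lambda>x. trace (f x :: 'n::finite cmat)) xs)"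
  by (induction xs) (auto simp: trace_add trace_0[unfolded mat_0])

lemma trace_cyc3: "trace ((A::'n::finite cmat) ** B ** C) = trace (B ** C ** A)"
  by (metis matrix_mul_assoc trace_mul_sym)

lemma unitary_adj: "unitary U \<Longrightarrow> unitary (adj U)"
  by (simp add: unitary_def)

lemma unitary_mult: "unitary U \<Longrightarrow> unitary V \<Longrightarrow> unitary (U ** V)"
  unfolding unitary_def adj_mult
  by (metis matrix_mul_assoc matrix_mul_lid)

lemma unitary_left_iff: "adj U ** U = mat 1 \<Longrightarrow> unitary U"
  unfolding unitary_def using matrix_left_right_inverse by blast

definition cinner :: "complex^'n::finite \<Rightarrow> complex^'n \<Rightarrow> complex" where
  "cinner x y = (\<Sum>i\<in>UNIV. cnj (x $ i) * y $ i)"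

lemma cinner_adj: "cinner x (M *v y) = cinner (adj M *v x) y"
  unfolding cinner_def matrix_vector_mult_def
  apply (simp add: sum_distrib_left sum_distrib_right)
  apply (subst sum.swap)
  apply (simp add: mult_ac)
  done

lemma cinner_cnj: "cnj (cinner x y) = cinner y x"
  unfolding cinner_def by (simp add: mult.commute)

lemma Re_cinner: "Re (cinner x y) = inner x y"
  unfolding cinner_def inner_vec_def inner_complex_def by (simp add: Re_sum)

lemma cinner_self_norm: "cinner x x = complex_of_real ((norm x)^2)"
proof -
  have "Im (cinner x x) = 0" unfolding cinner_def by (simp add: Im_sum)
  moreover have "Re (cinner x x) = (norm x)^2" by (simp add: Re_cinner power2_norm_eq_inner)
  ultimately show ?thesis by (simp add: complex_eq_iff)
qed

lemma cinner_add_right: "cinner x (y + z) = cinner x y + cinner x z"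
  unfolding cinner_def by (simp add: algebra_simps sum.distrib)
lemma cinner_add_left: "cinner (x + y) z = cinner x z + cinner y z"
  unfolding cinner_def by (simp add: algebra_simps sum.distrib)
lemma cinner_diff_right: "cinner x (y - z) = cinner x y - cinner x z"
  unfolding cinner_def by (simp add: algebra_simps sum_subtractf)
lemma cinner_diff_left: "cinner (x - y) z = cinner x z - cinner y z"
  unfolding cinner_def by (simp add: algebra_simps sum_subtractf)
lemma cinner_scale_right: "cinner x (c *s y) = c * cinner x y"
  unfolding cinner_def by (simp add: algebra_simps sum_distrib_left)
lemma cinner_scale_left: "cinner (c *s x) y = cnj c * cinner x y"
  unfolding cinner_def by (simp add: algebra_simps sum_distrib_left)

lemma mult_scale_vec: "M *v (c *s x) = c *s (M *v (x :: complex^'n::finite))"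
  by (simp add: vec_eq_iff matrix_vector_mult_def sum_distrib_left mult_ac)

lemma sR_nth: "(r *\<^sub>R (y::complex^'n)) $ i = complex_of_real r * y $ i"
  by (simp add: scaleR_conv_of_real[where 'a=complex])

lemma cinner_scaleR_right: "cinner x (r *\<^sub>R y) = complex_of_real r * cinner x y"
  unfolding cinner_def by (simp add: sR_nth scaleR_conv_of_real[where 'a=complex] sum_distrib_left mult_ac)
lemma cinner_scaleR_left: "cinner (r *\<^sub>R x) y = complex_of_real r * cinner x y"
  unfolding cinner_def by (simp add: sR_nth scaleR_conv_of_real[where 'a=complex] sum_distrib_left mult_ac)
lemma mv_scaleR: "M *v (r *\<^sub>R x) = r *\<^sub>R (M *v (x :: complex^'n::finite))"
  by (simp add: vec_eq_iff matrix_vector_mult_def sR_nth scaleR_conv_of_real[where 'a=complex] sum_distrib_left mult_ac)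
lemma cinner_zero_right[simp]: "cinner x 0 = 0" unfolding cinner_def by simp
lemma cinner_zero_left[simp]: "cinner 0 x = 0" unfolding cinner_def by simp

lemma herm_swap: "hermitian M \<Longrightarrow> cinner x (M *v y) = cinner (M *v x) y"
  by (simp add: cinner_adj hermitian_def)

lemma herm_real: assumes "hermitian M" shows "Im (cinner x (M *v x)) = 0"
proof -
  have "cnj (cinner x (M *v x)) = cinner x (M *v x)"
    using herm_swap[OF assms, of x x] by (simp add: cinner_cnj)
  then show ?thesis by (metis Reals_cnj_iff complex_is_Real_iff)
qed

lemma cont_nth: "continuous_on S (\<lambda>x::'a::real_normed_vector^'n. x $ i)"
  by (intro continuous_at_imp_continuous_on ballI isCont_vec_nth continuous_ident)

lemma cont_cinner: "continuous_on S (\<lambda>x. cinner v x)"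
  unfolding cinner_def by (intro continuous_intros cont_nth)

definition Qf :: "'n::finite cmat \<Rightarrow> complex^'n \<Rightarrow> real" where
  "Qf M x = Re (cinner x (M *v x))"

lemma cont_Qf: "continuous_on S (Qf M)"
  unfolding Qf_def cinner_def matrix_vector_mult_def
  by (intro continuous_intros cont_nth)

lemma exists_orth:
  fixes v :: "'m \<Rightarrow> complex^'n::finite"
  assumes fin: "finite I" and card: "card I < CARD('n)"
  shows "\<exists>x. x \<noteq> 0 \<and> (\<forall>j\<in>I. cinner (v j) x = 0)"
proof -
  let ?B = "v ` I \<union> (\<lambda>j. \<i> *s v j) ` I"
  have finB: "finite ?B" using fin by simp
  have "dim ?B \<le> card ?B" by (rule dim_le_card[OF span_superset finB])
  also have "\<dots> \<le> card (v ` I) + card ((\<lambda>j. \<i> *s v j) ` I)" by (rule card_Un_le)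
  also have "\<dots> \<le> card I + card I" by (intro add_mono card_image_le fin)
  also have "\<dots> < DIM(complex^'n)" using card by simp
  finally obtain x where x: "x \<noteq> 0" "\<And>y. y \<in> span ?B \<Longrightarrow> orthogonal x y"
    using orthogonal_to_subspace_exists by blast
  have "cinner (v j) x = 0" if j: "j \<in> I" for j
  proof -
    have "orthogonal x (v j)" using x(2) j by (simp add: span_base)
    then have r: "Re (cinner (v j) x) = 0" by (simp add: orthogonal_def Re_cinner inner_commute)
    have "orthogonal x (\<i> *s v j)" using x(2) j by (simp add: span_base)
    then have "Re (cinner (\<i> *s v j) x) = 0" by (simp add: orthogonal_def Re_cinner inner_commute)
    then have "Im (cinner (v j) x) = 0" by (simp add: cinner_scale_left)
    with r show ?thesis by (simp add: complex_eq_iff)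
  qed
  with x show ?thesis by blast
qed

lemma Qf_scaleR: "Qf M (r *\<^sub>R x) = r^2 * Qf M x"
  unfolding Qf_def by (simp add: mv_scaleR cinner_scaleR_left cinner_scaleR_right power2_eq_square)

lemma eig_exists:
  fixes M :: "'n::finite cmat" and v :: "'n \<Rightarrow> complex^'n"
  assumes herm: "hermitian M" and fin: "finite I" and card: "card I < CARD('n)"
    and eig: "\<forall>j\<in>I. M *v v j = complex_of_real (l j) *s v j"
  shows "\<exists>w \<mu>. norm w = 1 \<and> (\<forall>j\<in>I. cinner (v j) w = 0) \<and> M *v w = complex_of_real \<mu> *s w"
proof -
  define S where "S = (\<Inter>j\<in>I. {x. cinner (v j) x = 0})"
  have closedS: "closed S" unfolding S_def
    by (intro closed_INT ballI closed_Collect_eq cont_cinner continuous_on_const)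
  obtain x0 where x0: "x0 \<noteq> 0" "x0 \<in> S" using exists_orth[OF fin card, of v] unfolding S_def by auto
  have Ssc: "r *\<^sub>R x \<in> S" if "x \<in> S" for r x using that unfolding S_def by (auto simp: cinner_scaleR_right)
  have Sadd: "x + y \<in> S" if "x \<in> S" "y \<in> S" for x y using that unfolding S_def by (auto simp: cinner_add_right)
  have Sdiff: "x - y \<in> S" if "x \<in> S" "y \<in> S" for x y using that unfolding S_def by (auto simp: cinner_diff_right)
  define T where "T = sphere 0 1 \<inter> S"
  have cT: "compact T" unfolding T_def using closedS by (intro compact_Int_closed compact_sphere)
  have "(1 / norm x0) *\<^sub>R x0 \<in> T" unfolding T_def using x0 Ssc by auto
  then have neT: "T \<noteq> {}" by auto
  obtain x1 where x1T: "x1 \<in> T" and x1max: "\<And>y. y \<in> T \<Longrightarrow> Qf M y \<le> Qf M x1"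
    using continuous_attains_sup[OF cT neT cont_Qf] by blast
  have x1: "norm x1 = 1" "x1 \<in> S" using x1T unfolding T_def by auto
  define \<mu> where "\<mu> = Qf M x1"
  have bound: "Qf M y \<le> \<mu> * (norm y)^2" if "y \<in> S" for y
  proof (cases "y = 0")
    case True then show ?thesis by (simp add: Qf_def)
  next
    case False
    then have "(1 / norm y) *\<^sub>R y \<in> T" unfolding T_def using that Ssc by auto
    then have "Qf M ((1 / norm y) *\<^sub>R y) \<le> \<mu>" using x1max \<mu>_def by auto
    then have "(1/norm y)^2 * Qf M y \<le> \<mu>" by (simp add: Qf_scaleR)
    then show ?thesis using False by (simp add: field_simps power2_eq_square)
  qed
  define c where "c = cinner x1 (M *v x1)"
  have c: "c = complex_of_real \<mu>" unfolding c_def \<mu>_def Qf_def using herm_real[OF herm]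
    by (simp add: complex_eq_iff)
  have x1x1: "cinner x1 x1 = 1" using x1 by (simp add: cinner_self_norm)
  define z where "z = M *v x1 - c *s x1"
  have Mx1S: "M *v x1 \<in> S" unfolding S_def
  proof (intro InterI, clarsimp)
    fix j assume j: "j \<in> I"
    have "cinner (v j) (M *v x1) = cinner (M *v v j) x1" by (rule herm_swap[OF herm])
    also have "\<dots> = cnj (complex_of_real (l j)) * cinner (v j) x1" using eig j by (simp add: cinner_scale_left)
    also have "cinner (v j) x1 = 0" using x1 j unfolding S_def by auto
    finally show "cinner (v j) (M *v x1) = 0" by simp
  qed
  have "c *s x1 = Re c *\<^sub>R x1" using c by (simp add: vec_eq_iff scaleR_conv_of_real[where 'a=complex])
  then have zS: "z \<in> S" unfolding z_def using Mx1S Ssc x1 Sdiff by metis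
  have zx1: "cinner x1 z = 0" unfolding z_def by (simp add: cinner_diff_right cinner_scale_right x1x1 c_def)
  have x1z: "cinner z x1 = 0" using zx1 cinner_cnj[of x1 z] by simp
  define N where "N = (norm z)^2"
  have zz: "cinner z z = complex_of_real N" unfolding N_def by (rule cinner_self_norm)
  have zMx1: "cinner z (M *v x1) = complex_of_real N"
  proof -
    have "M *v x1 = z + c *s x1" unfolding z_def by simp
    then show ?thesis by (simp add: cinner_add_right cinner_scale_right x1z zz)
  qed
  have x1Mz: "cinner x1 (M *v z) = complex_of_real N"
    using herm_swap[OF herm, of x1 z] cinner_cnj[of z "M *v x1"] zMx1 by simp
  have N0: "N = 0"
  proof (rule ccontr)
    assume "N \<noteq> 0"
    then have Npos: "N > 0" unfolding N_def by simp
    define K where "K = \<mu> * N - Qf M z"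
    define t where "t = N / (\<bar>K\<bar> + 1)"
    have tpos: "t > 0" unfolding t_def using Npos by simp
    define y where "y = x1 + t *\<^sub>R z"
    have yS: "y \<in> S" unfolding y_def using x1 zS Ssc Sadd by blast
    have Qy: "Qf M y = \<mu> + 2 * t * N + t^2 * Qf M z"
      unfolding y_def Qf_def
      by (simp add: matrix_vector_right_distrib mv_scaleR cinner_add_left cinner_add_right
          cinner_scaleR_left cinner_scaleR_right zMx1 x1Mz c_def[symmetric] c power2_eq_square algebra_simps)
    have ny: "(norm y)^2 = 1 + t^2 * N"
    proof -
      have "complex_of_real ((norm y)^2) = cinner y y" by (simp add: cinner_self_norm)
      also have "\<dots> = 1 + complex_of_real (t^2 * N)" unfolding y_def
        by (simp add: cinner_add_left cinner_add_right cinner_scaleR_left cinner_scaleR_right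
            x1x1 zx1 x1z zz power2_eq_square)
      finally show ?thesis by (metis of_real_1 of_real_add of_real_eq_iff)
    qed
    from bound[OF yS] have "\<mu> + 2 * t * N + t^2 * Qf M z \<le> \<mu> * (1 + t^2 * N)" using Qy ny by simp
    then have "2 * t * N \<le> t^2 * K" unfolding K_def by (simp add: algebra_simps)
    also have "\<dots> \<le> t^2 * \<bar>K\<bar>" by (intro mult_left_mono) auto
    finally have "2 * N \<le> t * \<bar>K\<bar>" using tpos by (simp add: power2_eq_square)
    also have "t * \<bar>K\<bar> < N" unfolding t_def using Npos
      by (simp add: field_simps)
    finally show False using Npos by simp
  qed
  then have "z = 0" unfolding N_def by simp
  then have "M *v x1 = complex_of_real \<mu> *s x1" unfolding z_def c by simp
  with x1 show ?thesis unfolding S_def by blast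
qed

lemma eig_basis:
  fixes M :: "'n::finite cmat"
  assumes herm: "hermitian M"
  shows "\<exists>(v::'n \<Rightarrow> complex^'n) l. (\<forall>i j. cinner (v i) (v j) = (if i = j then 1 else 0)) \<and> (\<forall>i. M *v v i = complex_of_real (l i) *s v i)"
proof -
  have "\<exists>v l. (\<forall>i\<in>I. \<forall>j\<in>I. cinner (v i) (v j) = (if i = j then 1 else 0)) \<and> (\<forall>i\<in>I. M *v v i = complex_of_real (l i) *s v i)"
    if "finite I" for I :: "'n set"
    using that
  proof (induction I rule: finite_induct)
    case empty then show ?case by auto
  next
    case (insert x F)
    then obtain v l where vl: "\<forall>i\<in>F. \<forall>j\<in>F. cinner (v i) (v j) = (if i = j then 1 else 0)"
      "\<forall>i\<in>F. M *v v i = complex_of_real (l i) *s v i" by blast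
    have "card F < CARD('n)"
    proof -
      have "F \<subset> UNIV" using insert by auto
      then show ?thesis by (simp add: psubset_card_mono)
    qed
    then obtain w \<mu> where w: "norm w = 1" "\<forall>j\<in>F. cinner (v j) w = 0" "M *v w = complex_of_real \<mu> *s w"
      using eig_exists[OF herm insert(1) _ vl(2)] by blast
    have ww: "cinner w w = 1" using w(1) by (simp add: cinner_self_norm)
    have wv: "\<forall>j\<in>F. cinner w (v j) = 0" using w(2) cinner_cnj by (metis complex_cnj_zero)
    let ?v = "v(x := w)" and ?l = "l(x := \<mu>)"
    show ?case
      by (rule exI[of _ ?v], rule exI[of _ ?l]) (use vl w ww wv insert(2) in auto)
  qed
  from this[OF finite[of UNIV]] show ?thesis by fast
qed

lemma spectral_herm:
  fixes M :: "'n::finite cmat"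
  assumes herm: "hermitian M"
  shows "\<exists>U l. unitary U \<and> M = U ** diag_mat (\<lambda>i. complex_of_real (l i)) ** adj U
     \<and> (\<forall>i. complex_of_real (l i) = cinner (column i U) (M *v column i U))"
proof -
  obtain v :: "'n \<Rightarrow> complex^'n" and l where on: "\<And>i j. cinner (v i) (v j) = (if i = j then 1 else 0)"
    and eig: "\<And>i. M *v v i = complex_of_real (l i) *s v i"
    using eig_basis[OF herm] by blast
  define U :: "'n cmat" where "U = (\<chi> r c. v c $ r)"
  have col: "column i U = v i" for i unfolding U_def column_def by (simp add: vec_eq_iff)
  have "adj U ** U = mat 1"
  proof -
    have "(adj U ** U) $ i $ j = cinner (v i) (v j)" for i j
      unfolding U_def matrix_matrix_mult_def cinner_def by simp
    then show ?thesis using on by (simp add: vec_eq_iff mat_def)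
  qed
  then have U: "unitary U" by (rule unitary_left_iff)
  have MU: "M ** U = U ** diag_mat (\<lambda>i. complex_of_real (l i))"
  proof -
    have "(M ** U) $ r $ c = (M *v v c) $ r" for r c
      unfolding U_def matrix_matrix_mult_def matrix_vector_mult_def by simp
    moreover have "(U ** diag_mat (\<lambda>i. complex_of_real (l i))) $ r $ c = complex_of_real (l c) * v c $ r" for r c
      unfolding U_def matrix_matrix_mult_def by (simp add: if_distrib if_distribR sum.delta' cong: if_cong)
    ultimately show ?thesis using eig by (simp add: vec_eq_iff)
  qed
  have "M = M ** (U ** adj U)" using U unfolding unitary_def by simp
  also have "\<dots> = U ** diag_mat (\<lambda>i. complex_of_real (l i)) ** adj U" by (simp add: matrix_mul_assoc MU)
  finally have dec: "M = U ** diag_mat (\<lambda>i. complex_of_real (l i)) ** adj U" .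
  have "complex_of_real (l i) = cinner (column i U) (M *v column i U)" for i
    using on[of i i] by (simp add: col eig cinner_scale_right)
  with U dec show ?thesis by blast
qed

lemma psd_cinner: "psd M \<Longrightarrow> 0 \<le> cinner x (M *v x)"
  unfolding psd_def cinner_def by blast

lemma spectral_psd:
  fixes M :: "'n::finite cmat"
  assumes "psd M"
  shows "\<exists>U d. unitary U \<and> (\<forall>i. 0 \<le> d i) \<and> M = U ** diag_mat (\<lambda>i. complex_of_real (d i)) ** adj U"
proof -
  have herm: "hermitian M" using assms unfolding psd_def by blast
  obtain U l where U: "unitary U" "M = U ** diag_mat (\<lambda>i. complex_of_real (l i)) ** adj U"
    and l: "\<And>i. complex_of_real (l i) = cinner (column i U) (M *v column i U)"
    using spectral_herm[OF herm] by blast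
  have "0 \<le> l i" for i using psd_cinner[OF assms, of "column i U"] l[of i]
    by (metis less_eq_complex_def zero_complex.sel(1) Re_complex_of_real)
  with U show ?thesis by blast
qed

lemma diag_mult_right_nth: "(W ** diag_mat d) $ i $ j = W $ i $ j * d j"
  unfolding matrix_matrix_mult_def by (simp add: if_distrib if_distribR sum.delta' cong: if_cong)

lemma diag_mult_left_nth: "(diag_mat d ** W) $ i $ j = d i * W $ i $ j"
  unfolding matrix_matrix_mult_def by (simp add: if_distrib if_distribR sum.delta cong: if_cong)

lemma fc_unique:
  fixes U V :: "'n::finite cmat"
  assumes U: "unitary U" and V: "unitary V"
    and eq: "U ** diag_mat d ** adj U = V ** diag_mat e ** adj V"
  shows "U ** diag_mat (\<lambda>i. f (d i)) ** adj U = V ** diag_mat (\<lambda>i. f (e i)) ** adj V"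
proof -
  define W where "W = adj V ** U"
  have UU: "adj U ** U = mat 1" "U ** adj U = mat 1" using U unfolding unitary_def by auto
  have VV: "adj V ** V = mat 1" "V ** adj V = mat 1" using V unfolding unitary_def by auto
  have "adj V ** (U ** diag_mat d ** adj U) ** U = adj V ** (V ** diag_mat e ** adj V) ** U"
    using eq by simp
  then have WD: "W ** diag_mat d = diag_mat e ** W"
    unfolding W_def by (simp add: matrix_mul_assoc[symmetric] UU VV) (simp add: matrix_mul_assoc VV)
  have ent: "W $ i $ j * d j = e i * W $ i $ j" for i j
    using arg_cong[OF WD, of "\<lambda>M. M $ i $ j"] by (simp add: diag_mult_right_nth diag_mult_left_nth)
  have "W $ i $ j * f (d j) = f (e i) * W $ i $ j" for i j
  proof (cases "W $ i $ j = 0")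
    case True then show ?thesis by simp
  next
    case False
    then have "d j = e i" using ent[of i j] by (simp add: mult.commute)
    then show ?thesis by (simp add: mult.commute)
  qed
  then have WfD: "W ** diag_mat (\<lambda>i. f (d i)) = diag_mat (\<lambda>i. f (e i)) ** W"
    by (simp add: vec_eq_iff diag_mult_right_nth diag_mult_left_nth)
  have UVW: "U = V ** W" unfolding W_def by (simp add: matrix_mul_assoc VV)
  have "U ** diag_mat (\<lambda>i. f (d i)) ** adj U = V ** (W ** diag_mat (\<lambda>i. f (d i))) ** adj U"
    by (subst (1) UVW) (simp add: matrix_mul_assoc)
  also have "\<dots> = V ** diag_mat (\<lambda>i. f (e i)) ** (W ** adj U)" by (simp add: WfD matrix_mul_assoc)
  also have "W ** adj U = adj V" unfolding W_def by (simp add: matrix_mul_assoc[symmetric] UU)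
  finally show ?thesis .
qed

lemma mpow_eq:
  fixes U :: "'n::finite cmat"
  assumes U: "unitary U" and d: "\<And>i. 0 \<le> d i"
    and rho: "\<rho> = U ** diag_mat (\<lambda>i. complex_of_real (d i)) ** adj U"
  shows "mpow \<rho> a = U ** diag_mat (\<lambda>i. complex_of_real (d i powr a)) ** adj U"
proof -
  let ?P = "\<lambda>X. \<exists>U d. unitary U \<and> (\<forall>i. 0 \<le> d i) \<and>
       \<rho> = U ** diag_mat (\<lambda>i. complex_of_real (d i)) ** adj U \<and>
       X = U ** diag_mat (\<lambda>i. complex_of_real (d i powr a)) ** adj U"
  have "?P (U ** diag_mat (\<lambda>i. complex_of_real (d i powr a)) ** adj U)" using U d rho by blast
  then have "?P (mpow \<rho> a)" unfolding mpow_def by (rule someI)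
  then obtain U' d' where U': "unitary U'" "\<forall>i. 0 \<le> d' i"
    "\<rho> = U' ** diag_mat (\<lambda>i. complex_of_real (d' i)) ** adj U'"
    "mpow \<rho> a = U' ** diag_mat (\<lambda>i. complex_of_real (d' i powr a)) ** adj U'" by blast
  have "U' ** diag_mat (\<lambda>i. (\<lambda>z. complex_of_real (Re z powr a)) (complex_of_real (d' i))) ** adj U'
      = U ** diag_mat (\<lambda>i. (\<lambda>z. complex_of_real (Re z powr a)) (complex_of_real (d i))) ** adj U"
    by (rule fc_unique[OF U'(1) U]) (use U'(3) rho in simp)
  then show ?thesis using U'(4) by simp
qed

lemma psd_decomp:
  assumes "psd \<rho>"
  obtains U d where "unitary U" "\<And>i. 0 \<le> d i" "\<rho> = U ** diag_mat (\<lambda>i. complex_of_real (d i)) ** adj U"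
  using spectral_psd[OF assms] by blast

lemma scalar_lb:
  fixes x y :: complex
  assumes a: "a \<ge> 0" and b: "b \<ge> 0" and s: "s > 0"
  shows "(cmod (x + y))^2 * phi s a b \<le> b * (cmod x)^2 + (a/s) * (cmod y)^2"
proof (cases "s * b + a = 0")
  case True
  then have "a = 0" "b = 0" using a b s by (auto simp: add_nonneg_eq_0_iff)
  then show ?thesis by (simp add: phi_def)
next
  case False
  then have D: "s * b + a > 0" using a b s by (simp add: add_nonneg_pos less_le)
  define u where "u = cmod x"
  define w where "w = cmod y"
  have uv: "u \<ge> 0" "w \<ge> 0" unfolding u_def w_def by auto
  have tri: "cmod (x + y) \<le> u + w" unfolding u_def w_def by (rule norm_triangle_ineq)
  have sq: "(cmod (x + y))^2 \<le> (u + w)^2" using tri by (intro power_mono) auto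
  have key: "2 * (a * w) * (b*u) \<le> s * (b*u)^2 + (a * w)^2 / s"
  proof -
    have "0 \<le> (s*(b*u) - a * w)^2" by simp
    then have "2 * s * ((a * w) * (b*u)) \<le> s^2 * (b*u)^2 + (a * w)^2" by (simp add: power2_eq_square algebra_simps)
    then have "2 * ((a * w) * (b*u)) \<le> (s^2 * (b*u)^2 + (a * w)^2) / s" using s by (simp add: field_simps)
    also have "\<dots> = s * (b*u)^2 + (a * w)^2 / s" using s by (simp add: field_simps power2_eq_square)
    finally show ?thesis by (simp add: mult.assoc)
  qed
  have "(u + w)^2 * (a * b) \<le> (s * b + a) * (b * u^2 + (a/s) * w^2)"
  proof -
    have "(s * b + a) * (b * u^2 + (a/s) * w^2) = s * (b*u)^2 + a*b*w^2 + a*b*u^2 + (a * w)^2/s"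
      using s by (simp add: field_simps power2_eq_square)
    moreover have "(u + w)^2 * (a * b) = a*b*u^2 + 2*(a * w)*(b*u) + a*b*w^2"
      by (simp add: power2_eq_square algebra_simps)
    ultimately show ?thesis using key by linarith
  qed
  then have "(u + w)^2 * (a * b / (s * b + a)) \<le> b * u^2 + (a/s) * w^2"
    using D by (simp add: field_simps)
  moreover have "(cmod (x + y))^2 * (a * b / (s * b + a)) \<le> (u + w)^2 * (a * b / (s * b + a))"
    using sq a b D by (intro mult_right_mono) auto
  ultimately show ?thesis unfolding phi_def u_def w_def by linarith
qed

lemma scalar_opt:
  fixes \<kappa> :: complex
  assumes a: "a \<ge> 0" and b: "b \<ge> 0" and s: "s > 0"
  defines "r \<equiv> (if a + s * b = 0 then 1 else a / (a + s * b))"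
  shows "b * (cmod (complex_of_real r * \<kappa>))^2 + (a/s) * (cmod (\<kappa> - complex_of_real r * \<kappa>))^2
       = (cmod \<kappa>)^2 * phi s a b"
proof (cases "a + s * b = 0")
  case True
  then have "a = 0" "b = 0" using a b s by (auto simp: add_nonneg_eq_0_iff)
  then show ?thesis by (simp add: phi_def)
next
  case False
  then have D: "a + s * b > 0" using a b s by (simp add: add_nonneg_pos less_le)
  have r: "r = a / (a + s * b)" using False unfolding r_def by simp
  have 1: "\<kappa> - complex_of_real r * \<kappa> = complex_of_real (1 - r) * \<kappa>" by (simp add: algebra_simps)
  have 2: "1 - r = s * b / (a + s * b)" using D unfolding r by (simp add: field_simps)
  define D where "D = a + s * b"
  have "b * (a/D)^2 + (a/s) * (s*b/D)^2 = a*b*(a + s*b)/D^2" using s by (simp add: field_simps power2_eq_square add_divide_distrib)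
  also have "\<dots> = a*b/D" using D unfolding D_def by (simp add: power2_eq_square)
  finally have e: "b * (a/D)^2 + (a/s) * (s*b/D)^2 = a*b/D" .
  have "b * (r * cmod \<kappa>)^2 + (a/s) * ((1 - r) * cmod \<kappa>)^2 = (b * r^2 + (a/s) * (1-r)^2) * (cmod \<kappa>)^2"
    by (simp add: power2_eq_square algebra_simps)
  also have "\<dots> = (cmod \<kappa>)^2 * (a * b / (s * b + a))"
  proof -
    have rr: "r = a/D" "1 - r = s*b/D" using r 2 D_def by simp_all
    have "b * r^2 + (a/s)*(1-r)^2 = a*b/D" by (subst rr(2), subst rr(1), rule e)
    then show ?thesis unfolding D_def by (simp add: add.commute mult.commute)
  qed
  finally have "b * (r * cmod \<kappa>)^2 + (a/s) * ((1 - r) * cmod \<kappa>)^2 = (cmod \<kappa>)^2 * (a * b / (s * b + a))" .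
  moreover have "cmod (complex_of_real r * \<kappa>) = r * cmod \<kappa>"
  proof -
    have "r \<ge> 0" using D a unfolding r by simp
    then show ?thesis by (simp add: norm_mult)
  qed
  moreover have "cmod (complex_of_real (1 - r) * \<kappa>) = (1 - r) * cmod \<kappa>"
  proof -
    have "1 - r \<ge> 0" using D a b s unfolding 2 by simp
    then show ?thesis by (simp add: norm_mult del: of_real_diff)
  qed
  ultimately show ?thesis unfolding 1 phi_def by simp
qed

lemma unit_cancel1[simp]: "unitary U \<Longrightarrow> X ** U ** adj U = X"
  unfolding unitary_def by (simp add: matrix_mul_assoc[symmetric])
lemma unit_cancel2[simp]: "unitary U \<Longrightarrow> X ** adj U ** U = X"
  unfolding unitary_def by (simp add: matrix_mul_assoc[symmetric])
lemma unit_cancel3[simp]: "unitary U \<Longrightarrow> U ** adj U = mat 1"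
  unfolding unitary_def by simp
lemma unit_cancel4[simp]: "unitary U \<Longrightarrow> adj U ** U = mat 1"
  unfolding unitary_def by simp

lemma trace_conj: "unitary U \<Longrightarrow> trace (U ** X ** adj U) = trace X"
  by (metis trace_mul_sym matrix_mul_assoc matrix_mul_lid unit_cancel4)

lemma diag_sandwich_nth: "(diag_mat p ** A ** diag_mat q) $ j $ k = p j * A $ j $ k * q k"
  by (simp add: diag_mult_right_nth diag_mult_left_nth)

lemma trace_mult_adj: "trace (B ** adj A) = (\<Sum>j\<in>UNIV. \<Sum>k\<in>UNIV. B $ j $ k * cnj (A $ j $ k))"
  unfolding trace_def matrix_matrix_mult_def by simp

lemma cnj_mult_self: "z * cnj z = (complex_of_real (cmod z))^2"
  using complex_norm_square[of z] by simp
lemma cnj_mult_self': "cnj z * z = (complex_of_real (cmod z))^2"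
  using complex_norm_square[of z] by (simp add: mult.commute)

lemma trace_diag_left: "trace (diag_mat p ** B) = (\<Sum>k\<in>UNIV. p k * B $ k $ k)"
  by (simp add: trace_def diag_mult_left_nth)

lemma trace_diag_form:
  "trace (diag_mat (\<lambda>i. complex_of_real (p i)) ** A ** diag_mat (\<lambda>i. complex_of_real (q i)) ** adj A)
   = complex_of_real (\<Sum>j\<in>UNIV. \<Sum>k\<in>UNIV. (cmod (A $ j $ k))^2 * (p j * q k))"
proof -
  have "trace (diag_mat (\<lambda>i. complex_of_real (p i)) ** A ** diag_mat (\<lambda>i. complex_of_real (q i)) ** adj A)
     = (\<Sum>j\<in>UNIV. \<Sum>k\<in>UNIV. complex_of_real (p j) * A $ j $ k * complex_of_real (q k) * cnj (A $ j $ k))"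
    by (simp add: trace_mult_adj diag_sandwich_nth)
  also have "\<dots> = (\<Sum>j\<in>UNIV. \<Sum>k\<in>UNIV. complex_of_real ((cmod (A $ j $ k))^2 * (p j * q k)))"
    by (intro sum.cong refl) (simp add: cnj_mult_self cnj_mult_self' mult_ac)
  finally show ?thesis by simp
qed

lemma trace_diag_adjA_A:
  "trace (diag_mat (\<lambda>i. complex_of_real (p i)) ** (adj A ** A))
   = complex_of_real (\<Sum>j\<in>UNIV. \<Sum>k\<in>UNIV. p k * (cmod (A $ j $ k))^2)"
proof -
  have "trace (diag_mat (\<lambda>i. complex_of_real (p i)) ** (adj A ** A))
      = (\<Sum>k\<in>UNIV. complex_of_real (p k) * (\<Sum>j\<in>UNIV. cnj (A $ j $ k) * A $ j $ k))"
    unfolding trace_diag_left by (simp add: matrix_matrix_mult_def)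
  also have "\<dots> = (\<Sum>k\<in>UNIV. \<Sum>j\<in>UNIV. complex_of_real (p k * (cmod (A $ j $ k))^2))"
    by (simp add: sum_distrib_left cnj_mult_self cnj_mult_self' mult_ac)
  also have "\<dots> = complex_of_real (\<Sum>j\<in>UNIV. \<Sum>k\<in>UNIV. p k * (cmod (A $ j $ k))^2)"
    by (subst sum.swap) simp
  finally show ?thesis .
qed

lemma trace_diag_A_adjA:
  "trace (diag_mat (\<lambda>i. complex_of_real (p i)) ** (A ** adj A))
   = complex_of_real (\<Sum>j\<in>UNIV. \<Sum>k\<in>UNIV. p j * (cmod (A $ j $ k))^2)"
proof -
  have "trace (diag_mat (\<lambda>i. complex_of_real (p i)) ** (A ** adj A))
      = (\<Sum>j\<in>UNIV. complex_of_real (p j) * (\<Sum>k\<in>UNIV. A $ j $ k * cnj (A $ j $ k)))"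
    unfolding trace_diag_left by (simp add: matrix_matrix_mult_def)
  also have "\<dots> = complex_of_real (\<Sum>j\<in>UNIV. \<Sum>k\<in>UNIV. p j * (cmod (A $ j $ k))^2)"
    by (simp add: sum_distrib_left cnj_mult_self)
  finally show ?thesis .
qed

definition Fsum :: "real \<Rightarrow> ('n::finite \<Rightarrow> real) \<Rightarrow> 'n cmat \<Rightarrow> real" where
  "Fsum a d A = (\<Sum>j\<in>UNIV. \<Sum>k\<in>UNIV. (cmod (A $ j $ k))^2 * (d j powr a * d k powr (1-a)))"

definition Hs :: "real \<Rightarrow> ('n::finite \<Rightarrow> real) \<Rightarrow> 'n cmat \<Rightarrow> real" where
  "Hs s d A = (\<Sum>j\<in>UNIV. \<Sum>k\<in>UNIV. (cmod (A $ j $ k))^2 * phi s (d j) (d k))"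

definition costm :: "'n::finite cmat \<Rightarrow> real \<Rightarrow> 'n cmat \<Rightarrow> 'n cmat \<Rightarrow> complex" where
  "costm \<rho> s X Y = trace (\<rho> ** (adj X ** X)) + complex_of_real (1/s) * trace (\<rho> ** (Y ** adj Y))"

definition Fm :: "real \<Rightarrow> 'n::finite cmat \<Rightarrow> 'n cmat \<Rightarrow> complex" where
  "Fm a \<rho> K = trace (mpow \<rho> a ** (K ** mpow \<rho> (1-a) ** adj K))"

lemma Fm_formula:
  assumes U: "unitary U" and d: "\<And>i. 0 \<le> d i"
    and rho: "\<rho> = U ** diag_mat (\<lambda>i. complex_of_real (d i)) ** adj U"
  shows "Fm a \<rho> K = complex_of_real (Fsum a d (adj U ** K ** U))"
proof -
  let ?Da = "diag_mat (\<lambda>i. complex_of_real (d i powr a))"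
  let ?Db = "diag_mat (\<lambda>i. complex_of_real (d i powr (1-a)))"
  let ?K = "adj U ** K ** U"
  have "Fm a \<rho> K = trace (U ** ?Da ** adj U ** (K ** (U ** ?Db ** adj U) ** adj K))"
    unfolding Fm_def mpow_eq[OF U d rho] ..
  also have "U ** ?Da ** adj U ** (K ** (U ** ?Db ** adj U) ** adj K) = U ** (?Da ** ?K ** ?Db ** adj ?K) ** adj U"
    using U by (simp add: adj_mult matrix_mul_assoc)
  also have "trace \<dots> = trace (?Da ** ?K ** ?Db ** adj ?K)" by (rule trace_conj[OF U])
  also have "\<dots> = complex_of_real (Fsum a d ?K)" unfolding Fsum_def trace_diag_form ..
  finally show ?thesis .
qed

lemma cost_formula:
  assumes U: "unitary U" and rho: "\<rho> = U ** diag_mat (\<lambda>i. complex_of_real (d i)) ** adj U"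
  shows "costm \<rho> s X Y = complex_of_real ((\<Sum>j\<in>UNIV. \<Sum>k\<in>UNIV. d k * (cmod ((adj U ** X ** U) $ j $ k))^2)
            + (1/s) * (\<Sum>j\<in>UNIV. \<Sum>k\<in>UNIV. d j * (cmod ((adj U ** Y ** U) $ j $ k))^2))"
proof -
  let ?D = "diag_mat (\<lambda>i. complex_of_real (d i))"
  let ?X = "adj U ** X ** U" and ?Y = "adj U ** Y ** U"
  have "\<rho> ** (adj X ** X) = U ** (?D ** (adj ?X ** ?X)) ** adj U"
    using U unfolding rho by (simp add: adj_mult matrix_mul_assoc)
  then have 1: "trace (\<rho> ** (adj X ** X)) = trace (?D ** (adj ?X ** ?X))" using trace_conj[OF U] by simp
  have "\<rho> ** (Y ** adj Y) = U ** (?D ** (?Y ** adj ?Y)) ** adj U"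
    using U unfolding rho by (simp add: adj_mult matrix_mul_assoc)
  then have 2: "trace (\<rho> ** (Y ** adj Y)) = trace (?D ** (?Y ** adj ?Y))" using trace_conj[OF U] by simp
  show ?thesis unfolding costm_def 1 2 trace_diag_adjA_A trace_diag_A_adjA by simp
qed

lemma conj_add: "adj U ** (X + Y) ** U = adj U ** X ** U + adj U ** Y ** (U :: 'n::finite cmat)"
  by (simp add: matrix_add_ldistrib matrix_add_rdistrib)

lemma cost_real:
  assumes U: "unitary U" and rho: "\<rho> = U ** diag_mat (\<lambda>i. complex_of_real (d i)) ** adj U"
  shows "costm \<rho> s X Y = complex_of_real (Re (costm \<rho> s X Y))"
  unfolding cost_formula[OF U rho] by simp

lemma cost_LB:
  assumes U: "unitary U" and d: "\<And>i. 0 \<le> d i"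
    and rho: "\<rho> = U ** diag_mat (\<lambda>i. complex_of_real (d i)) ** adj U"
    and s: "s > 0" and K: "X + Y = K"
  shows "Hs s d (adj U ** K ** U) \<le> Re (costm \<rho> s X Y)"
proof -
  let ?X = "adj U ** X ** U" and ?Y = "adj U ** Y ** U"
  have KXY: "adj U ** K ** U = ?X + ?Y" unfolding K[symmetric] by (rule conj_add)
  have "Hs s d (adj U ** K ** U) = (\<Sum>j\<in>UNIV. \<Sum>k\<in>UNIV. (cmod (?X $ j $ k + ?Y $ j $ k))^2 * phi s (d j) (d k))"
    unfolding Hs_def KXY by simp
  also have "\<dots> \<le> (\<Sum>j\<in>UNIV. \<Sum>k\<in>UNIV. d k * (cmod (?X $ j $ k))^2 + (d j / s) * (cmod (?Y $ j $ k))^2)"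
    by (intro sum_mono scalar_lb d s)
  also have "\<dots> = (\<Sum>j\<in>UNIV. \<Sum>k\<in>UNIV. d k * (cmod (?X $ j $ k))^2)
            + (1/s) * (\<Sum>j\<in>UNIV. \<Sum>k\<in>UNIV. d j * (cmod (?Y $ j $ k))^2)"
    by (simp add: sum.distrib sum_distrib_left)
  also have "\<dots> = Re (costm \<rho> s X Y)" unfolding cost_formula[OF U rho] by simp
  finally show ?thesis .
qed

lemma cost_OPT:
  assumes U: "unitary U" and d: "\<And>i. 0 \<le> d i"
    and rho: "\<rho> = U ** diag_mat (\<lambda>i. complex_of_real (d i)) ** adj U"
    and s: "s > 0"
  shows "\<exists>X Y. X + Y = K \<and> costm \<rho> s X Y = complex_of_real (Hs s d (adj U ** K ** U))"
proof -
  define K' where "K' = adj U ** K ** U"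
  define r where "r = (\<lambda>j k. if d j + s * d k = 0 then 1 else d j / (d j + s * d k))"
  define X' :: "'a cmat" where "X' = (\<chi> j k. complex_of_real (r j k) * K' $ j $ k)"
  define Y' where "Y' = K' - X'"
  define X where "X = U ** X' ** adj U"
  define Y where "Y = U ** Y' ** adj U"
  have cX: "adj U ** X ** U = X'" unfolding X_def using U by (simp add: matrix_mul_assoc)
  have cY: "adj U ** Y ** U = Y'" unfolding Y_def using U by (simp add: matrix_mul_assoc)
  have "X + Y = U ** (X' + Y') ** adj U" unfolding X_def Y_def by (simp add: matrix_add_ldistrib matrix_add_rdistrib)
  also have "\<dots> = K" unfolding Y'_def K'_def using U by (simp add: matrix_mul_assoc)
  finally have XY: "X + Y = K" .
  have "costm \<rho> s X Y = complex_of_real ((\<Sum>j\<in>UNIV. \<Sum>k\<in>UNIV. d k * (cmod (X' $ j $ k))^2)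
            + (1/s) * (\<Sum>j\<in>UNIV. \<Sum>k\<in>UNIV. d j * (cmod (Y' $ j $ k))^2))"
    unfolding cost_formula[OF U rho] cX cY ..
  also have "(\<Sum>j\<in>UNIV. \<Sum>k\<in>UNIV. d k * (cmod (X' $ j $ k))^2)
            + (1/s) * (\<Sum>j\<in>UNIV. \<Sum>k\<in>UNIV. d j * (cmod (Y' $ j $ k))^2)
      = (\<Sum>j\<in>UNIV. \<Sum>k\<in>UNIV. d k * (cmod (complex_of_real (r j k) * K' $ j $ k))^2
            + (d j / s) * (cmod (K' $ j $ k - complex_of_real (r j k) * K' $ j $ k))^2)"
    unfolding X'_def Y'_def by (simp add: sum.distrib sum_distrib_left)
  also have "\<dots> = Hs s d K'"
    unfolding Hs_def r_def by (intro sum.cong refl scalar_opt d s)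
  finally show ?thesis using XY unfolding K'_def by blast
qed

lemma Hs_prod: "Hs s d A = (\<Sum>x\<in>UNIV. (\<lambda>(j,k). (cmod (A $ j $ k))^2) x * phi s ((\<lambda>(j,k). d j) x) ((\<lambda>(j,k). d k) x))"
  unfolding Hs_def sum.cartesian_product by (simp add: case_prod_beta)

lemma Fsum_prod: "Fsum a d A = (\<Sum>x\<in>UNIV. (\<lambda>(j,k). (cmod (A $ j $ k))^2) x * (((\<lambda>(j,k). d j) x) powr a * ((\<lambda>(j,k). d k) x) powr (1-a)))"
  unfolding Fsum_def sum.cartesian_product by (simp add: case_prod_beta)

lemma Fm_real:
  assumes "psd \<rho>"
  shows "Fm a \<rho> K = complex_of_real (Re (Fm a \<rho> K))"
proof -
  obtain U d where U: "unitary U" "\<And>i. 0 \<le> d i" "\<rho> = U ** diag_mat (\<lambda>i. complex_of_real (d i)) ** adj U"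
    using psd_decomp[OF assms] by blast
  show ?thesis unfolding Fm_formula[OF U] by simp
qed

lemma mono_principle:
  fixes \<rho>1 K1 :: "'m::finite cmat" and \<rho>2 K2 :: "'n::finite cmat"
  assumes p1: "psd \<rho>1" and p2: "psd \<rho>2" and a: "0 < a" "a < 1"
    and H: "\<And>s X Y. s > 0 \<Longrightarrow> X + Y = K2 \<Longrightarrow> \<exists>X1 Y1. X1 + Y1 = K1 \<and> Re (costm \<rho>1 s X1 Y1) \<le> Re (costm \<rho>2 s X Y)"
  shows "Re (Fm a \<rho>1 K1) \<le> Re (Fm a \<rho>2 K2)"
proof -
  obtain U1 d1 where U1: "unitary U1" "\<And>i. 0 \<le> d1 i" "\<rho>1 = U1 ** diag_mat (\<lambda>i. complex_of_real (d1 i)) ** adj U1"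
    using psd_decomp[OF p1] by blast
  obtain U2 d2 where U2: "unitary U2" "\<And>i. 0 \<le> d2 i" "\<rho>2 = U2 ** diag_mat (\<lambda>i. complex_of_real (d2 i)) ** adj U2"
    using psd_decomp[OF p2] by blast
  let ?A1 = "adj U1 ** K1 ** U1" and ?A2 = "adj U2 ** K2 ** U2"
  have Hle: "Hs s d1 ?A1 \<le> Hs s d2 ?A2" if s: "s > 0" for s
  proof -
    obtain X Y where XY: "X + Y = K2" "costm \<rho>2 s X Y = complex_of_real (Hs s d2 ?A2)"
      using cost_OPT[OF U2 s] by blast
    obtain X1 Y1 where X1: "X1 + Y1 = K1" "Re (costm \<rho>1 s X1 Y1) \<le> Re (costm \<rho>2 s X Y)"
      using H[OF s XY(1)] by blast
    have "Hs s d1 ?A1 \<le> Re (costm \<rho>1 s X1 Y1)" by (rule cost_LB[OF U1 s X1(1)])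
    also have "\<dots> \<le> Hs s d2 ?A2" using X1(2) XY(2) by simp
    finally show ?thesis .
  qed
  have "Fsum a d1 ?A1 \<le> Fsum a d2 ?A2"
    unfolding Fsum_prod
    by (rule compare_int[OF finite finite a]) (use U1(2) U2(2) Hle[unfolded Hs_prod] in auto)
  then show ?thesis unfolding Fm_formula[OF U1] Fm_formula[OF U2] by simp
qed

lemma kron_nth[simp]: "kron A B $ p $ q = A $ fst p $ fst q * B $ snd p $ snd q"
  by (simp add: kron_def)

lemma sum_pair: "(\<Sum>r\<in>(UNIV::('a::finite \<times> 'b::finite) set). f r) = (\<Sum>r1\<in>UNIV. \<Sum>r2\<in>UNIV. f (r1, r2))"
  by (simp add: sum.cartesian_product)

lemma kron_mult: "kron A B ** kron C D = kron (A ** C) (B ** (D :: 'b::finite cmat))"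
  for A C :: "'a::finite cmat"
  by (simp add: vec_eq_iff matrix_matrix_mult_def sum_pair sum_product mult_ac)

lemma adj_kron: "adj (kron A B) = kron (adj A) (adj B)"
  by (simp add: vec_eq_iff)

lemma kron_add_left: "kron (A + B) C = kron A C + kron B C"
  by (simp add: vec_eq_iff algebra_simps)

lemma kron_add_right: "kron C (A + B) = kron C A + kron C B"
  by (simp add: vec_eq_iff algebra_simps)

lemma kron_mat1: "kron (mat 1 :: 'a::finite cmat) (mat 1 :: 'b::finite cmat) = mat 1"
  by (simp add: vec_eq_iff mat_def prod_eq_iff)

lemma trace_kron_I: "trace (\<rho> ** kron Z (mat 1)) = trace (ptrace_B \<rho> ** Z)"
  for \<rho> :: "('a::finite \<times> 'b::finite) cmat"
proof -
  have "trace (\<rho> ** kron Z (mat 1)) = (\<Sum>i\<in>UNIV. \<Sum>j\<in>UNIV. \<Sum>k\<in>UNIV. \<Sum>l\<in>UNIV. \<rho> $ (i,j) $ (k,l) * (Z $ k $ i * (mat 1 :: 'b cmat) $ l $ j))"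
    unfolding trace_def matrix_matrix_mult_def by (simp add: sum_pair)
  also have "\<dots> = (\<Sum>i\<in>UNIV. \<Sum>j\<in>UNIV. \<Sum>k\<in>UNIV. \<rho> $ (i,j) $ (k,j) * Z $ k $ i)"
    by (simp add: mat_def if_distrib if_distribR sum.delta' cong: if_cong)
  also have "\<dots> = (\<Sum>i\<in>UNIV. \<Sum>k\<in>UNIV. (\<Sum>j\<in>UNIV. \<rho> $ (i,j) $ (k,j)) * Z $ k $ i)"
    by (simp add: sum_distrib_right) (subst sum.swap, simp)
  also have "\<dots> = trace (ptrace_B \<rho> ** Z)"
    unfolding trace_def matrix_matrix_mult_def ptrace_B_def by simp
  finally show ?thesis .
qed

lemma costm_kron:
  "costm \<rho> s (kron X (mat 1)) (kron Y (mat 1)) = costm (ptrace_B \<rho>) s X Y"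
  unfolding costm_def by (simp add: adj_kron kron_mult trace_kron_I)

lemma herm_ptrace: "hermitian \<rho> \<Longrightarrow> hermitian (ptrace_B \<rho>)"
  unfolding hermitian_def ptrace_B_def
  by (simp add: vec_eq_iff)

lemma quad_ptrace:
  fixes \<rho> :: "('a::finite \<times> 'b::finite) cmat" and x :: "complex^'a"
  shows "(\<Sum>i\<in>UNIV. cnj (x $ i) * (ptrace_B \<rho> *v x) $ i)
       = (\<Sum>j\<in>UNIV. \<Sum>p\<in>UNIV. cnj ((\<chi> q. if snd q = j then x $ fst q else 0) $ p)
             * (\<rho> *v (\<chi> q. if snd q = j then x $ fst q else 0)) $ p)"
proof -
  have "(\<Sum>j\<in>UNIV. \<Sum>p\<in>UNIV. cnj ((\<chi> q. if snd q = j then x $ fst q else 0) $ p)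
             * (\<rho> *v (\<chi> q. if snd q = j then x $ fst q else 0)) $ p)
     = (\<Sum>j\<in>UNIV. \<Sum>i\<in>UNIV. \<Sum>l\<in>UNIV. cnj (if l = j then x $ i else 0) *
          (\<Sum>k\<in>UNIV. \<Sum>m\<in>UNIV. \<rho> $ (i,l) $ (k,m) * (if m = j then x $ k else 0)))"
    unfolding matrix_vector_mult_def sum_pair by (simp cong: if_cong)
  also have "\<dots> = (\<Sum>j\<in>UNIV. \<Sum>i\<in>UNIV. cnj (x $ i) * (\<Sum>k\<in>UNIV. \<rho> $ (i,j) $ (k,j) * x $ k))"
    by (simp add: if_distrib if_distribR sum.delta' cong: if_cong)
  also have "\<dots> = (\<Sum>i\<in>UNIV. \<Sum>j\<in>UNIV. cnj (x $ i) * (\<Sum>k\<in>UNIV. \<rho> $ (i,j) $ (k,j) * x $ k))"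
    by (rule sum.swap)
  also have "\<dots> = (\<Sum>i\<in>UNIV. cnj (x $ i) * (ptrace_B \<rho> *v x) $ i)"
    unfolding matrix_vector_mult_def ptrace_B_def
    by (simp add: sum_distrib_left sum_distrib_right) (subst (2) sum.swap, simp)
  finally show ?thesis by simp
qed

lemma psd_ptrace: "psd \<rho> \<Longrightarrow> psd (ptrace_B \<rho>)"
  unfolding psd_def
proof (intro conjI allI)
  assume h: "hermitian \<rho> \<and> (\<forall>x. 0 \<le> (\<Sum>i\<in>UNIV. cnj (x $ i) * (\<rho> *v x) $ i))"
  then show "hermitian (ptrace_B \<rho>)" by (simp add: herm_ptrace)
  fix x
  show "0 \<le> (\<Sum>i\<in>UNIV. cnj (x $ i) * (ptrace_B \<rho> *v x) $ i)"
    unfolding quad_ptrace by (rule sum_nonneg) (use h in blast)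
qed

lemma part1_K:
  fixes \<rho> :: "('a::finite \<times> 'b::finite) cmat"
  assumes p: "psd \<rho>" and a: "0 < a" "a < 1"
  shows "Re (Fm a \<rho> (kron K (mat 1))) \<le> Re (Fm a (ptrace_B \<rho>) K)"
proof (rule mono_principle[OF p psd_ptrace[OF p] a])
  fix s :: real and X Y assume "s > 0" "X + Y = K"
  then show "\<exists>X1 Y1. X1 + Y1 = kron K (mat 1) \<and> Re (costm \<rho> s X1 Y1) \<le> Re (costm (ptrace_B \<rho>) s X Y)"
    by (intro exI[of _ "kron X (mat 1)"] exI[of _ "kron Y (mat 1)"]) (simp add: costm_kron kron_add_left[symmetric])
qed

lemma cinner_sum_right: "cinner x (\<Sum>i\<in>I. f i) = (\<Sum>i\<in>I. cinner x (f i))"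
  by (induction I rule: infinite_finite_induct) (auto simp: cinner_add_right)

lemma mv_sum_left: "(\<Sum>i\<in>I. M i) *v x = (\<Sum>i\<in>I. M i *v (x :: complex^'n::finite))"
  by (induction I rule: infinite_finite_induct) (auto simp: matrix_vector_mult_add_rdistrib)

lemma norm_sq_cinner: "(norm x)^2 = Re (cinner x x)"
  by (simp add: cinner_self_norm)

lemma Re_cinner_le: "Re (cinner x y) \<le> norm x * norm y"
  unfolding Re_cinner by (rule norm_cauchy_schwarz)

lemma VL:
  fixes L :: "'i \<Rightarrow> 'n::finite cmat" and w :: "'i \<Rightarrow> complex^'n"
  assumes fin: "finite I" and id: "(\<Sum>i\<in>I. adj (L i) ** L i) = mat 1"
  shows "(norm (\<Sum>i\<in>I. adj (L i) *v w i))^2 \<le> (\<Sum>i\<in>I. (norm (w i))^2)"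
proof -
  define z where "z = (\<Sum>i\<in>I. adj (L i) *v w i)"
  define S where "S = L2_set (\<lambda>i. norm (w i)) I"
  have Lz: "L2_set (\<lambda>i. norm (L i *v z)) I = norm z"
  proof -
    have "(\<Sum>i\<in>I. (norm (L i *v z))^2) = Re (\<Sum>i\<in>I. cinner z (adj (L i) *v (L i *v z)))"
      by (simp add: norm_sq_cinner cinner_adj Re_sum)
    also have "\<dots> = Re (cinner z ((\<Sum>i\<in>I. adj (L i) ** L i) *v z))"
      by (simp add: mv_sum_left cinner_sum_right matrix_vector_mul_assoc)
    also have "\<dots> = (norm z)^2" by (simp add: id norm_sq_cinner)
    finally show ?thesis unfolding L2_set_def by simp
  qed
  have "(norm z)^2 = Re (cinner z z)" by (rule norm_sq_cinner)
  also have "\<dots> = (\<Sum>i\<in>I. Re (cinner (L i *v z) (w i)))"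
    unfolding z_def[symmetric, THEN sym] unfolding z_def
    by (simp add: cinner_sum_right Re_sum cinner_adj[of _ "adj _", simplified] del: adj_adj)
  also have "\<dots> \<le> (\<Sum>i\<in>I. \<bar>norm (L i *v z)\<bar> * \<bar>norm (w i)\<bar>)"
    by (intro sum_mono) (simp add: Re_cinner_le)
  also have "\<dots> \<le> norm z * S" unfolding S_def Lz[symmetric] by (rule L2_set_mult_ineq)
  finally have le: "(norm z)^2 \<le> norm z * S" .
  have S2: "S^2 = (\<Sum>i\<in>I. (norm (w i))^2)" unfolding S_def L2_set_def by (simp add: sum_nonneg)
  have "S \<ge> 0" unfolding S_def by (rule L2_set_nonneg)
  show ?thesis
  proof (cases "norm z = 0")
    case True then show ?thesis unfolding z_def[symmetric] by (simp add: sum_nonneg)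
  next
    case False
    then have "norm z \<le> S" using le by (simp add: power2_eq_square)
    then have "(norm z)^2 \<le> S^2" by (intro power_mono) auto
    then show ?thesis unfolding z_def[symmetric] S2 .
  qed
qed


lemma trace_decomp:
  assumes U: "unitary U" and rho: "\<rho> = U ** diag_mat (\<lambda>i. complex_of_real (d i)) ** adj U"
  shows "trace (\<rho> ** A) = (\<Sum>k\<in>UNIV. complex_of_real (d k) * cinner (column k U) (A *v column k U))"
proof -
  have "\<rho> ** A = U ** (diag_mat (\<lambda>i. complex_of_real (d i)) ** (adj U ** A ** U)) ** adj U"
    using U unfolding rho by (simp add: matrix_mul_assoc)
  then have "trace (\<rho> ** A) = trace (diag_mat (\<lambda>i. complex_of_real (d i)) ** (adj U ** A ** U))"
    using trace_conj[OF U] by simp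
  also have "\<dots> = (\<Sum>k\<in>UNIV. complex_of_real (d k) * (adj U ** A ** U) $ k $ k)"
    by (rule trace_diag_left)
  also have "\<dots> = (\<Sum>k\<in>UNIV. complex_of_real (d k) * cinner (column k U) (A *v column k U))"
    unfolding cinner_def matrix_matrix_mult_def matrix_vector_mult_def column_def
    by (simp add: sum_distrib_left sum_distrib_right mult_ac) (subst sum.swap, simp)
  finally show ?thesis .
qed

lemma KS:
  fixes L :: "'i \<Rightarrow> 'n::finite cmat"
  assumes p: "psd \<rho>" and fin: "finite I" and id: "(\<Sum>i\<in>I. adj (L i) ** L i) = mat 1"
  shows "Re (trace (\<rho> ** (adj (\<Sum>i\<in>I. adj (L i) ** X ** L i) ** (\<Sum>i\<in>I. adj (L i) ** X ** L i))))
     \<le> Re (trace (\<rho> ** (\<Sum>i\<in>I. adj (L i) ** (adj X ** X) ** L i)))"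
proof -
  obtain U d where U: "unitary U" "\<And>i. 0 \<le> d i" "\<rho> = U ** diag_mat (\<lambda>i. complex_of_real (d i)) ** adj U"
    using psd_decomp[OF p] by blast
  define Z where "Z = (\<Sum>i\<in>I. adj (L i) ** X ** L i)"
  have per: "Re (cinner u ((adj Z ** Z) *v u)) \<le> Re (cinner u ((\<Sum>i\<in>I. adj (L i) ** (adj X ** X) ** L i) *v u))" for u
  proof -
    have "Re (cinner u ((adj Z ** Z) *v u)) = (norm (Z *v u))^2"
      by (simp add: matrix_vector_mul_assoc[symmetric] norm_sq_cinner cinner_adj[of _ "adj _", simplified] del: adj_adj)
    also have "Z *v u = (\<Sum>i\<in>I. adj (L i) *v (X *v (L i *v u)))"
      unfolding Z_def by (simp add: mv_sum_left matrix_vector_mul_assoc matrix_mul_assoc)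
    also have "(norm \<dots>)^2 \<le> (\<Sum>i\<in>I. (norm (X *v (L i *v u)))^2)" by (rule VL[OF fin id])
    also have "\<dots> = Re (cinner u ((\<Sum>i\<in>I. adj (L i) ** (adj X ** X) ** L i) *v u))"
      by (simp add: mv_sum_left cinner_sum_right Re_sum norm_sq_cinner matrix_vector_mul_assoc[symmetric]
          cinner_adj[of _ "adj _", simplified] del: adj_adj)
    finally show ?thesis .
  qed
  show ?thesis
    unfolding Z_def[symmetric] trace_decomp[OF U(1) U(3)] Re_sum
    by (intro sum_mono) (simp add: U(2) mult_left_mono per)
qed

lemma sum_list_map_nth: "sum_list (map f xs) = (\<Sum>i\<in>{0..<length xs}. f (xs ! i))"
  by (simp add: sum_list_sum_nth)

definition Estar :: "'n::finite cmat list \<Rightarrow> 'n cmat \<Rightarrow> 'n cmat" where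
  "Estar Ls X = sum_list (map (\<lambda>L. adj L ** X ** L) Ls)"

lemma Estar_add: "Estar Ls (X + Y) = Estar Ls X + Estar Ls Y"
  unfolding Estar_def
  by (induction Ls) (simp_all add: matrix_add_ldistrib matrix_add_rdistrib algebra_simps)

lemma adj_Estar: "adj (Estar Ls X) = Estar Ls (adj X)"
  unfolding Estar_def adj_sum_list by (simp add: adj_mult matrix_mul_assoc)

lemma trace_apply_ch: "trace (apply_ch Ls \<rho> ** W) = trace (\<rho> ** Estar Ls W)"
proof -
  have "trace (apply_ch Ls \<rho> ** W) = sum_list (map (\<lambda>L. trace (L ** \<rho> ** adj L ** W)) Ls)"
    unfolding apply_ch_def matrix_mult_sum_list_left trace_sum_list by (simp add: o_def)
  also have "\<dots> = sum_list (map (\<lambda>L. trace (\<rho> ** (adj L ** W ** L))) Ls)"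
    by (intro arg_cong[where f=sum_list] map_cong refl)
       (metis matrix_mul_assoc trace_mul_sym)
  also have "\<dots> = trace (\<rho> ** Estar Ls W)"
    unfolding Estar_def matrix_mult_sum_list_right trace_sum_list by (simp add: o_def)
  finally show ?thesis .
qed

lemma kron_zero_right[simp]: "kron (A :: 'a::finite cmat) (0 :: 'b::finite cmat) = 0"
  by (simp add: vec_eq_iff)

lemma kron_sum_list_right: "kron A (sum_list (map f xs)) = sum_list (map (\<lambda>x. kron A (f x :: 'b::finite cmat)) xs)"
  for A :: "'a::finite cmat"
  by (induction xs) (simp_all add: kron_add_right)

lemma kron_zero_left[simp]: "kron (0 :: 'a::finite cmat) (A :: 'b::finite cmat) = 0"
  by (simp add: vec_eq_iff)

lemma kron_sum_list_left: "kron (sum_list (map f xs)) A = sum_list (map (\<lambda>x. kron (f x :: 'a::finite cmat) A) xs)"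
  for A :: "'b::finite cmat"
  by (induction xs) (simp_all add: kron_add_left)

lemma ext_B_channel:
  assumes "is_channel Ls"
  shows "(\<Sum>L\<leftarrow>(ext_B Ls :: ('a::finite \<times> 'b::finite) cmat list). adj L ** L) = mat 1"
proof -
  have "(\<Sum>L\<leftarrow>(ext_B Ls :: ('a \<times> 'b) cmat list). adj L ** L) = kron (mat 1 :: 'a cmat) (\<Sum>L\<leftarrow>Ls. adj L ** L)"
    unfolding ext_B_def kron_sum_list_right by (simp add: o_def adj_kron kron_mult)
  also have "\<dots> = mat 1" using assms unfolding is_channel_def by (simp add: kron_mat1)
  finally show ?thesis .
qed

lemma Estar_ext_B_kron:
  assumes "is_channel Ls"
  shows "Estar (ext_B Ls :: ('a::finite \<times> 'b::finite) cmat list) (kron K (mat 1)) = kron K (mat 1)"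
proof -
  have "Estar (ext_B Ls :: ('a \<times> 'b) cmat list) (kron K (mat 1)) = kron K (\<Sum>L\<leftarrow>Ls. adj L ** L)"
    unfolding Estar_def ext_B_def kron_sum_list_right by (simp add: o_def adj_kron kron_mult)
  also have "\<dots> = kron K (mat 1)" using assms unfolding is_channel_def by simp
  finally show ?thesis .
qed

lemma psd_apply_ch:
  assumes p: "psd \<rho>"
  shows "psd (apply_ch Ls \<rho>)"
proof -
  have h: "hermitian \<rho>" using p unfolding psd_def by blast
  have "hermitian (apply_ch Ls \<rho>)"
    using h unfolding hermitian_def apply_ch_def adj_sum_list by (simp add: adj_mult matrix_mul_assoc)
  moreover have "0 \<le> cinner x (apply_ch Ls \<rho> *v x)" for x
  proof -
    have "cinner x (apply_ch Ls \<rho> *v x) = (\<Sum>i\<in>{0..<length Ls}. cinner (adj (Ls ! i) *v x) (\<rho> *v (adj (Ls ! i) *v x)))"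
      unfolding apply_ch_def sum_list_map_nth mv_sum_left cinner_sum_right
      by (intro sum.cong refl) (simp add: matrix_vector_mul_assoc[symmetric] cinner_adj)
    also have "\<dots> \<ge> 0" by (intro sum_nonneg psd_cinner[OF p])
    finally show ?thesis .
  qed
  ultimately show ?thesis unfolding psd_def cinner_def by blast
qed

lemma KS_list:
  assumes p: "psd \<rho>" and ch: "(\<Sum>L\<leftarrow>Ls. adj L ** L) = mat 1"
  shows "Re (trace (\<rho> ** (adj (Estar Ls X) ** Estar Ls X))) \<le> Re (trace (\<rho> ** Estar Ls (adj X ** X)))"
proof -
  have id: "(\<Sum>i\<in>{0..<length Ls}. adj (Ls ! i) ** Ls ! i) = mat 1" using ch unfolding sum_list_map_nth .
  show ?thesis unfolding Estar_def sum_list_map_nth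
    by (rule KS[OF p finite_atLeastLessThan id])
qed

lemma part3_K:
  fixes \<rho> :: "('a::finite \<times> 'b::finite) cmat"
  assumes p: "psd \<rho>" and ch: "is_channel Ls" and a: "0 < a" "a < 1"
  shows "Re (Fm a \<rho> (kron K (mat 1))) \<le> Re (Fm a (apply_ch (ext_B Ls :: ('a \<times> 'b) cmat list) \<rho>) (kron K (mat 1)))"
proof (rule mono_principle[OF p psd_apply_ch[OF p] a])
  fix s :: real and X Y :: "('a \<times> 'b) cmat"
  assume s: "s > 0" and XY: "X + Y = kron K (mat 1)"
  let ?E = "ext_B Ls :: ('a \<times> 'b) cmat list"
  let ?\<sigma> = "apply_ch ?E \<rho>"
  have chE: "(\<Sum>L\<leftarrow>?E. adj L ** L) = mat 1" by (rule ext_B_channel[OF ch])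
  have sum: "Estar ?E X + Estar ?E Y = kron K (mat 1)"
    unfolding Estar_add[symmetric] XY by (rule Estar_ext_B_kron[OF ch])
  have 1: "Re (trace (\<rho> ** (adj (Estar ?E X) ** Estar ?E X))) \<le> Re (trace (?\<sigma> ** (adj X ** X)))"
    unfolding trace_apply_ch by (rule KS_list[OF p chE])
  have "Estar ?E Y ** adj (Estar ?E Y) = adj (Estar ?E (adj Y)) ** Estar ?E (adj Y)"
    by (simp add: adj_Estar)
  then have 2: "Re (trace (\<rho> ** (Estar ?E Y ** adj (Estar ?E Y)))) \<le> Re (trace (?\<sigma> ** (Y ** adj Y)))"
    using KS_list[OF p chE, of "adj Y"] unfolding trace_apply_ch by simp
  have "Re (costm \<rho> s (Estar ?E X) (Estar ?E Y)) \<le> Re (costm ?\<sigma> s X Y)"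
    unfolding costm_def using 1 2 s by (simp add: add_mono divide_right_mono)
  with sum show "\<exists>X1 Y1. X1 + Y1 = kron K (mat 1) \<and> Re (costm \<rho> s X1 Y1) \<le> Re (costm ?\<sigma> s X Y)"
    by blast
qed

lemma T_alpha_Fm: "T_alpha a \<rho> Ks = 1 - sum_list (map (Fm a \<rho>) Ks)"
  unfolding T_alpha_def apply_ch_def matrix_mult_sum_list_right trace_sum_list Fm_def
  by (simp add: o_def)

lemma DT_Fm: "DT a \<rho> Ks = sum_list (map (Fm a (ptrace_B \<rho>)) Ks) - sum_list (map (\<lambda>K. Fm a \<rho> (kron K (mat 1))) Ks)"
  unfolding DT_def T_alpha_Fm ext_A_def by (simp add: o_def)

lemma trace_ext:
  fixes A B :: "'n::finite cmat"
  assumes "\<And>Z. trace (A ** Z) = trace (B ** Z)"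
  shows "A = B"
proof -
  have "A $ p $ q = B $ p $ q" for p q
  proof -
    define Z :: "'n cmat" where "Z = (\<chi> i j. if i = q \<and> j = p then 1 else 0)"
    have "trace (A ** Z) = A $ p $ q" for A :: "'n cmat"
    proof -
      have "trace (A ** Z) = (\<Sum>i\<in>UNIV. \<Sum>k\<in>UNIV. A $ i $ k * Z $ k $ i)"
        unfolding trace_def matrix_matrix_mult_def by simp
      also have "\<dots> = (\<Sum>i\<in>UNIV. if i = p then (\<Sum>k\<in>UNIV. if k = q then A $ i $ k else 0) else 0)"
      proof (intro sum.cong refl)
        fix i
        show "(\<Sum>k\<in>UNIV. A $ i $ k * Z $ k $ i) = (if i = p then (\<Sum>k\<in>UNIV. if k = q then A $ i $ k else 0) else 0)"
        proof (cases "i = p")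
          case True
          have "(\<Sum>k\<in>UNIV. A $ i $ k * Z $ k $ i) = (\<Sum>k\<in>UNIV. if k = q then A $ i $ k else 0)"
            unfolding Z_def using True by (intro sum.cong refl) simp
          then show ?thesis using True by simp
        next
          case False
          then show ?thesis unfolding Z_def by simp
        qed
      qed
      also have "\<dots> = A $ p $ q" by simp
      finally show ?thesis .
    qed
    then show ?thesis using assms[of Z] by simp
  qed
  then show ?thesis by (simp add: vec_eq_iff)
qed

lemma ptrace_char:
  assumes "\<And>Z. trace (X ** kron Z (mat 1)) = trace (Y ** Z)"
  shows "ptrace_B X = Y"
  by (rule trace_ext) (simp add: trace_kron_I[symmetric] assms)

lemma mpow_conj:
  assumes V: "unitary V" and p: "psd \<rho>"
  shows "mpow (V ** \<rho> ** adj V) c = V ** mpow \<rho> c ** adj V"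
proof -
  obtain U d where U: "unitary U" "\<And>i. 0 \<le> d i" "\<rho> = U ** diag_mat (\<lambda>i. complex_of_real (d i)) ** adj U"
    using psd_decomp[OF p] by blast
  have VU: "unitary (V ** U)" by (rule unitary_mult[OF V U(1)])
  have "V ** \<rho> ** adj V = (V ** U) ** diag_mat (\<lambda>i. complex_of_real (d i)) ** adj (V ** U)"
    unfolding U(3) by (simp add: adj_mult matrix_mul_assoc)
  then have "mpow (V ** \<rho> ** adj V) c = (V ** U) ** diag_mat (\<lambda>i. complex_of_real (d i powr c)) ** adj (V ** U)"
    by (rule mpow_eq[OF VU U(2)])
  also have "\<dots> = V ** mpow \<rho> c ** adj V"
    unfolding mpow_eq[OF U] by (simp add: adj_mult matrix_mul_assoc)
  finally show ?thesis .
qed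

lemma Fm_conj:
  assumes V: "unitary V" and p: "psd \<rho>"
  shows "Fm a (V ** \<rho> ** adj V) K = Fm a \<rho> (adj V ** K ** V)"
proof -
  have "Fm a (V ** \<rho> ** adj V) K = trace (V ** (mpow \<rho> a ** (adj V ** K ** V) ** mpow \<rho> (1-a) ** adj (adj V ** K ** V)) ** adj V)"
    unfolding Fm_def mpow_conj[OF V p] using V by (simp add: adj_mult matrix_mul_assoc)
  also have "\<dots> = Fm a \<rho> (adj V ** K ** V)"
    unfolding trace_conj[OF V] Fm_def by (simp add: matrix_mul_assoc)
  finally show ?thesis .
qed

lemma unitary_kron:
  assumes "unitary A" "unitary B"
  shows "unitary (kron A B)"
  using assms unfolding unitary_def by (simp add: adj_kron kron_mult kron_mat1)

lemma psd_conj: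
  assumes V: "unitary V" and p: "psd \<rho>"
  shows "psd (V ** \<rho> ** adj V)"
proof -
  have h: "hermitian \<rho>" using p unfolding psd_def by blast
  have "hermitian (V ** \<rho> ** adj V)" using h unfolding hermitian_def by (simp add: adj_mult matrix_mul_assoc)
  moreover have "0 \<le> cinner x ((V ** \<rho> ** adj V) *v x)" for x
  proof -
    have "cinner x ((V ** \<rho> ** adj V) *v x) = cinner (adj V *v x) (\<rho> *v (adj V *v x))"
      by (simp add: matrix_vector_mul_assoc[symmetric] cinner_adj)
    then show ?thesis using psd_cinner[OF p] by simp
  qed
  ultimately show ?thesis unfolding psd_def cinner_def by blast
qed

lemma sum_list_cle:
  assumes "\<And>K. K \<in> set Ks \<Longrightarrow> Re (f K) \<le> Re (g K) \<and> Im (f K) = 0 \<and> Im (g K) = 0"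
  shows "sum_list (map f Ks) \<le> (sum_list (map g Ks) :: complex)"
  using assms
proof (induction Ks)
  case Nil then show ?case by simp
next
  case (Cons K Ks)
  have "f K \<le> g K" using Cons.prems[of K] by (simp add: less_eq_complex_def)
  moreover have "sum_list (map f Ks) \<le> sum_list (map g Ks)" using Cons by simp
  ultimately show ?case by (simp add: add_mono)
qed

lemma Im_Fm: "psd \<rho> \<Longrightarrow> Im (Fm a \<rho> K) = 0"
  using Fm_real by (metis Im_complex_of_real)

lemma density_psd: "density \<rho> \<Longrightarrow> psd \<rho>"
  unfolding density_def by blast

lemma part_i:
  fixes \<rho> :: "('a::finite \<times> 'b::finite) cmat"
  assumes d: "density \<rho>" and a: "0 < a" "a < 1"
  shows "0 \<le> DT a \<rho> Ks"
proof -
  have p: "psd \<rho>" by (rule density_psd[OF d])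
  have "sum_list (map (\<lambda>K. Fm a \<rho> (kron K (mat 1))) Ks) \<le> sum_list (map (Fm a (ptrace_B \<rho>)) Ks)"
    by (rule sum_list_cle) (use part1_K[OF p a] Im_Fm[OF p] Im_Fm[OF psd_ptrace[OF p]] in auto)
  then show ?thesis unfolding DT_Fm by simp
qed

lemma trace_kron: "trace (kron A B) = trace A * trace B"
  unfolding trace_def by (simp add: sum_pair sum_product)

lemma diag_mult_diag: "diag_mat p ** diag_mat q = diag_mat (\<lambda>i. p i * q i)"
  by (simp add: vec_eq_iff diag_mult_left_nth)

lemma kron_diag: "kron (diag_mat p) (diag_mat q) = diag_mat (\<lambda>x. p (fst x) * q (snd x))"
  by (simp add: vec_eq_iff prod_eq_iff)

lemma mpow_kron:
  assumes pA: "psd A" and pB: "psd B"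
  shows "mpow (kron A B) c = kron (mpow A c) (mpow B c)"
proof -
  obtain UA dA where UA: "unitary UA" "\<And>i. 0 \<le> dA i" "A = UA ** diag_mat (\<lambda>i. complex_of_real (dA i)) ** adj UA"
    using psd_decomp[OF pA] by blast
  obtain UB dB where UB: "unitary UB" "\<And>i. 0 \<le> dB i" "B = UB ** diag_mat (\<lambda>i. complex_of_real (dB i)) ** adj UB"
    using psd_decomp[OF pB] by blast
  define V where "V = kron UA UB"
  have V: "unitary V" unfolding V_def by (rule unitary_kron[OF UA(1) UB(1)])
  have dn: "0 \<le> dA (fst x) * dB (snd x)" for x using UA(2) UB(2) by simp
  have kd: "diag_mat (\<lambda>x. complex_of_real (dA (fst x) * dB (snd x))) = kron (diag_mat (\<lambda>i. complex_of_real (dA i))) (diag_mat (\<lambda>i. complex_of_real (dB i)))"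
    by (simp add: kron_diag)
  have "kron A B = V ** diag_mat (\<lambda>x. complex_of_real (dA (fst x) * dB (snd x))) ** adj V"
    by (simp only: kd V_def adj_kron kron_mult UA(3) UB(3))
  then have "mpow (kron A B) c = V ** diag_mat (\<lambda>x. complex_of_real ((dA (fst x) * dB (snd x)) powr c)) ** adj V"
    by (rule mpow_eq[OF V dn])
  also have "\<dots> = kron (mpow A c) (mpow B c)"
  proof -
    have kd2: "diag_mat (\<lambda>x. complex_of_real ((dA (fst x) * dB (snd x)) powr c))
       = kron (diag_mat (\<lambda>i. complex_of_real (dA i powr c))) (diag_mat (\<lambda>i. complex_of_real (dB i powr c)))"
      by (simp add: kron_diag powr_mult UA(2) UB(2))
    show ?thesis by (simp only: kd2 V_def adj_kron kron_mult mpow_eq[OF UA] mpow_eq[OF UB])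
  qed
  finally show ?thesis .
qed

lemma mpow_mult_compl:
  assumes p: "psd B"
  shows "mpow B a ** mpow B (1-a) = B"
proof -
  obtain U d where U: "unitary U" "\<And>i. 0 \<le> d i" "B = U ** diag_mat (\<lambda>i. complex_of_real (d i)) ** adj U"
    using psd_decomp[OF p] by blast
  have e: "d i powr a * d i powr (1-a) = d i" for i
  proof -
    have "d i powr a * d i powr (1-a) = d i powr (a + (1-a))" by (rule powr_add[symmetric])
    also have "\<dots> = d i" using U(2)[of i] by simp
    finally show ?thesis .
  qed
  have "mpow B a ** mpow B (1-a) = U ** (diag_mat (\<lambda>i. complex_of_real (d i powr a)) ** diag_mat (\<lambda>i. complex_of_real (d i powr (1-a)))) ** adj U"
    unfolding mpow_eq[OF U] using U(1) by (simp add: matrix_mul_assoc)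
  also have "\<dots> = B" unfolding diag_mult_diag U(3) by (simp add: of_real_mult[symmetric] e del: of_real_mult)
  finally show ?thesis .
qed

lemma part_prod:
  fixes \<rho>A :: "'a::finite cmat" and \<rho>B :: "'b::finite cmat"
  assumes dA: "density \<rho>A" and dB: "density \<rho>B"
  shows "DT a (kron \<rho>A \<rho>B) Ks = 0"
proof -
  have pA: "psd \<rho>A" and pB: "psd \<rho>B" using dA dB by (auto intro: density_psd)
  have tB: "trace \<rho>B = 1" using dB unfolding density_def by blast
  have pt: "ptrace_B (kron \<rho>A \<rho>B) = \<rho>A"
    unfolding ptrace_B_def using tB by (simp add: vec_eq_iff sum_distrib_left[symmetric] trace_def)
  have F: "Fm a (kron \<rho>A \<rho>B) (kron K (mat 1)) = Fm a \<rho>A K" for K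
  proof -
    have "Fm a (kron \<rho>A \<rho>B) (kron K (mat 1))
        = trace (kron (mpow \<rho>A a ** (K ** mpow \<rho>A (1-a) ** adj K)) (mpow \<rho>B a ** mpow \<rho>B (1-a)))"
      unfolding Fm_def mpow_kron[OF pA pB] by (simp add: adj_kron kron_mult)
    also have "\<dots> = Fm a \<rho>A K" unfolding trace_kron mpow_mult_compl[OF pB] tB Fm_def by simp
    finally show ?thesis .
  qed
  show ?thesis unfolding DT_Fm pt F by simp
qed

lemma trace_conj_move: "trace (V ** \<rho> ** adj V ** W) = trace (\<rho> ** (adj V ** W ** V))"
  by (metis matrix_mul_assoc trace_mul_sym)

lemma part_ii:
  fixes \<rho> :: "('a::finite \<times> 'b::finite) cmat"
  assumes d: "density \<rho>" and UA: "unitary UA" and UB: "unitary UB"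
  shows "DT a (kron UA UB ** \<rho> ** adj (kron UA UB)) Ks = DT a \<rho> (map (\<lambda>K. adj UA ** K ** UA) Ks)"
proof -
  have p: "psd \<rho>" by (rule density_psd[OF d])
  define V where "V = kron UA UB"
  have V: "unitary V" unfolding V_def by (rule unitary_kron[OF UA UB])
  have cK: "adj V ** kron Z (mat 1) ** V = kron (adj UA ** Z ** UA) (mat 1)" for Z
    unfolding V_def using UB by (simp add: adj_kron kron_mult)
  have pt: "ptrace_B (V ** \<rho> ** adj V) = UA ** ptrace_B \<rho> ** adj UA"
  proof (rule ptrace_char)
    fix Z
    have "trace (V ** \<rho> ** adj V ** kron Z (mat 1)) = trace (\<rho> ** kron (adj UA ** Z ** UA) (mat 1))"
      unfolding trace_conj_move cK ..
    also have "\<dots> = trace (ptrace_B \<rho> ** (adj UA ** Z ** UA))" by (rule trace_kron_I)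
    also have "\<dots> = trace (UA ** ptrace_B \<rho> ** adj UA ** Z)"
      by (metis matrix_mul_assoc trace_mul_sym)
    finally show "trace (V ** \<rho> ** adj V ** kron Z (mat 1)) = trace (UA ** ptrace_B \<rho> ** adj UA ** Z)" .
  qed
  have F1: "Fm a (V ** \<rho> ** adj V) (kron K (mat 1)) = Fm a \<rho> (kron (adj UA ** K ** UA) (mat 1))" for K
    unfolding Fm_conj[OF V p] cK ..
  have F2: "Fm a (UA ** ptrace_B \<rho> ** adj UA) K = Fm a (ptrace_B \<rho>) (adj UA ** K ** UA)" for K
    by (rule Fm_conj[OF UA psd_ptrace[OF p]])
  show ?thesis unfolding V_def[symmetric] DT_Fm pt F1 F2 by (simp add: o_def)
qed

lemma part_iii:
  fixes \<rho> :: "('a::finite \<times> 'b::finite) cmat"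
  assumes d: "density \<rho>" and ch: "is_channel Ls" and a: "0 < a" "a < 1"
  shows "DT a (apply_ch (ext_B Ls :: ('a \<times> 'b) cmat list) \<rho>) Ks \<le> DT a \<rho> Ks"
proof -
  have p: "psd \<rho>" by (rule density_psd[OF d])
  let ?\<sigma> = "apply_ch (ext_B Ls :: ('a \<times> 'b) cmat list) \<rho>"
  have ps: "psd ?\<sigma>" by (rule psd_apply_ch[OF p])
  have pt: "ptrace_B ?\<sigma> = ptrace_B \<rho>"
  proof (rule ptrace_char)
    fix Z :: "'a cmat"
    show "trace (?\<sigma> ** kron Z (mat 1)) = trace (ptrace_B \<rho> ** Z)"
      unfolding trace_apply_ch Estar_ext_B_kron[OF ch] by (rule trace_kron_I)
  qed
  have "sum_list (map (\<lambda>K. Fm a \<rho> (kron K (mat 1))) Ks) \<le> sum_list (map (\<lambda>K. Fm a ?\<sigma> (kron K (mat 1))) Ks)"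
    by (rule sum_list_cle) (use part3_K[OF p ch a] Im_Fm[OF p] Im_Fm[OF ps] in auto)
  then show ?thesis unfolding DT_Fm pt by simp
qed

theorem theorem2:
  fixes a :: real
    and \<rho> :: "('a::finite \<times> 'b::finite) cmat"
    and Ks :: "'a cmat list"
  assumes "0 < a" "a < 1"
    and "density \<rho>"
    and "is_channel Ks"
  shows "0 \<le> DT a \<rho> Ks
    \<and> (\<forall>\<rho>A \<rho>B. density \<rho>A \<and> density \<rho>B \<longrightarrow>
           DT a (kron \<rho>A \<rho>B :: ('a \<times> 'b) cmat) Ks = 0)
    \<and> (\<forall>UA UB. unitary (UA :: 'a cmat) \<and> unitary (UB :: 'b cmat) \<longrightarrow>
           DT a (kron UA UB ** \<rho> ** adj (kron UA UB)) Ks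
             = DT a \<rho> (map (\<lambda>K. adj UA ** K ** UA) Ks))
    \<and> (\<forall>Ls :: 'b cmat list. is_channel Ls \<longrightarrow>
           DT a (apply_ch (ext_B Ls :: ('a \<times> 'b) cmat list) \<rho>) Ks \<le> DT a \<rho> Ks)"
proof (intro conjI allI impI)
  show "0 \<le> DT a \<rho> Ks" by (rule part_i[OF assms(3) assms(1,2)])
next
  fix \<rho>A :: "'a cmat" and \<rho>B :: "'b cmat"
  assume "density \<rho>A \<and> density \<rho>B"
  then show "DT a (kron \<rho>A \<rho>B :: ('a \<times> 'b) cmat) Ks = 0" using part_prod by blast
next
  fix UA :: "'a cmat" and UB :: "'b cmat"
  assume "unitary UA \<and> unitary UB"
  then show "DT a (kron UA UB ** \<rho> ** adj (kron UA UB)) Ks = DT a \<rho> (map (\<lambda>K. adj UA ** K ** UA) Ks)"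
    using part_ii[OF assms(3)] by blast
next
  fix Ls :: "'b cmat list"
  assume "is_channel Ls"
  then show "DT a (apply_ch (ext_B Ls :: ('a \<times> 'b) cmat list) \<rho>) Ks \<le> DT a \<rho> Ks"
    using part_iii[OF assms(3) _ assms(1,2)] by blast
qed

end
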